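(* Let $\mathcal{H}$ be a complex separable Hilbert space, $A\in\mathcal{B}(\mathcal{H})$, and $\mathcal{G}\subset\mathcal{H}$ a countable Bessel system. Assume the semigroup $\{e^{tA}\}_{t\ge0}$ is exponentially stable. Then the following are equivalent: (i) $\{e^{tA}g\}_{g\in\mathcal{G},\,t\in[0,\infty)}$ is a semi-continuous frame for $\mathcal{H}$. (ii) There exists $\delta>0$ such that for every uniformly separated countable set $T=\{t_j:j\in\mathbb{N}\}\subset[0,\infty)$ with $t_1=0$ and $0<t_{j+1}-t_j<\delta$ for all $j\in\mathbb{N}$, the system $\{e^{tA}g\}_{g\in\mathcal{G},\,t\in T}$ is a frame for $\mathcal{H}$. (iii) There exists $m>0$ such that, with $T=\{jm: j=0,1,2,\dots\}$, the system $\{e^{tA}g\}_{g\in\mathcal{G},\,t\in T}$ is a frame for $\mathcal{H}$.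
   Context: For $A\in\mathcal{B}(\mathcal{H})$, $e^{tA}:=\sum_{n\ge0}\frac{t^n}{n!}A^n$. The semigroup $\{e^{tA}\}_{t\ge0}$ is exponentially stable if there are constants $M\ge1$ and $\omega<0$ with $\|e^{tA}\|\le Me^{\omega t}$ for all $t\ge0$ (for bounded $A$ this is equivalent to $\mathrm{Re}\,\lambda<0$ for all $\lambda$ in the spectrum of $A$). A set $T\subset\mathbb{R}$ is uniformly separated if $\inf\{|t-t'|:t,t'\in T,\,t\ne t'\}>0$. A countable family $\{f_k\}\subset\mathcal{H}$ is a Bessel system if there is $C>0$ with $\sum_k|\langle f,f_k\rangle|^2\le C\|f\|^2$ for all $f\in\mathcal{H}$, and a frame if moreover there is $c>0$ with $c\|f\|^2\le\sum_k|\langle f,f_k\rangle|^2$ for all $f$. For a countable $\mathcal{G}\subset\mathcal{H}$ and an interval $\mathcal{T}\subset[0,\infty)$, $\{e^{tA}g\}_{g\in\mathcal{G},t\in\mathcal{T}}$ is a semi-continuous frame for $\mathcal{H}$ if there are constants $c,C>0$ such that $c\|f\|^2\le\sum_{g\in\mathcal{G}}\int_{\mathcal{T}}|\langle f,e^{tA}g\rangle|^2\,dt\le C\|f\|^2$ for all $f\in\mathcal{H}$. *)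

theory Defs
  imports "HOL-Analysis.Analysis"
begin

text \<open>A complex Hilbert space is modelled as a real Hilbert space (type class
  real_inner + complete_space) together with a complex structure J, which is the
  action of multiplication by the imaginary unit: J is real-linear, J (J x) = - x,
  and J preserves the real inner product.\<close>

definition complex_structure :: "('a::real_inner \<Rightarrow> 'a) \<Rightarrow> bool" where
  "complex_structure J \<longleftrightarrow> linear J \<and> (\<forall>x. J (J x) = - x) \<and>
     (\<forall>x y. inner (J x) (J y) = inner x y)"

definition cscale :: "('a::real_vector \<Rightarrow> 'a) \<Rightarrow> complex \<Rightarrow> 'a \<Rightarrow> 'a" where
  "cscale J c x = Re c *\<^sub>R x + Im c *\<^sub>R J x"

text \<open>The complex inner product (linear in the first argument) whose real part is the
  real inner product.\<close>
definition cinner :: "('a::real_inner \<Rightarrow> 'a) \<Rightarrow> 'a \<Rightarrow> 'a \<Rightarrow> complex" where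
  "cinner J x y = Complex (inner x y) (inner x (J y))"

definition bounded_clinear_op :: "('a::real_inner \<Rightarrow> 'a) \<Rightarrow> ('a \<Rightarrow> 'a) \<Rightarrow> bool" where
  "bounded_clinear_op J A \<longleftrightarrow> bounded_linear A \<and> (\<forall>c x. A (cscale J c x) = cscale J c (A x))"

definition separable_space :: "'a::metric_space itself \<Rightarrow> bool" where
  "separable_space _ \<longleftrightarrow> (\<exists>D::'a set. countable D \<and> closure D = UNIV)"

definition op_exp :: "real \<Rightarrow> ('a::real_normed_vector \<Rightarrow> 'a) \<Rightarrow> 'a \<Rightarrow> 'a" where
  "op_exp t A x = (\<Sum>n. (t ^ n / fact n) *\<^sub>R (A ^^ n) x)"

definition exp_stable :: "('a::real_normed_vector \<Rightarrow> 'a) \<Rightarrow> bool" where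
  "exp_stable A \<longleftrightarrow> (\<exists>M \<ge> 1. \<exists>\<omega> < 0. \<forall>t \<ge> 0. onorm (op_exp t A) \<le> M * exp (\<omega> * t))"

definition uniformly_separated :: "real set \<Rightarrow> bool" where
  "uniformly_separated T \<longleftrightarrow> (\<exists>\<epsilon>>0. \<forall>t\<in>T. \<forall>t'\<in>T. t \<noteq> t' \<longrightarrow> \<epsilon> \<le> \<bar>t - t'\<bar>)"

definition bessel_family :: "('a::real_inner \<Rightarrow> 'a) \<Rightarrow> ('i \<Rightarrow> 'a) \<Rightarrow> 'i set \<Rightarrow> bool" where
  "bessel_family J F I \<longleftrightarrow> (\<exists>C>0. \<forall>f. (\<lambda>k. (cmod (cinner J f (F k)))\<^sup>2) summable_on I \<and>
      (\<Sum>\<^sub>\<infinity>k\<in>I. (cmod (cinner J f (F k)))\<^sup>2) \<le> C * (norm f)\<^sup>2)"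

definition frame_family :: "('a::real_inner \<Rightarrow> 'a) \<Rightarrow> ('i \<Rightarrow> 'a) \<Rightarrow> 'i set \<Rightarrow> bool" where
  "frame_family J F I \<longleftrightarrow> (\<exists>c>0. \<exists>C>0. \<forall>f. (\<lambda>k. (cmod (cinner J f (F k)))\<^sup>2) summable_on I \<and>
      c * (norm f)\<^sup>2 \<le> (\<Sum>\<^sub>\<infinity>k\<in>I. (cmod (cinner J f (F k)))\<^sup>2) \<and>
      (\<Sum>\<^sub>\<infinity>k\<in>I. (cmod (cinner J f (F k)))\<^sup>2) \<le> C * (norm f)\<^sup>2)"

definition semicont_frame :: "('a::real_inner \<Rightarrow> 'a) \<Rightarrow> ('a \<Rightarrow> 'a) \<Rightarrow> 'a set \<Rightarrow> real set \<Rightarrow> bool" where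
  "semicont_frame J A G Tc \<longleftrightarrow> (\<exists>c>0. \<exists>C>0. \<forall>f.
      (\<forall>g\<in>G. set_integrable lborel Tc (\<lambda>t. (cmod (cinner J f (op_exp t A g)))\<^sup>2)) \<and>
      (\<lambda>g. LINT t:Tc|lborel. (cmod (cinner J f (op_exp t A g)))\<^sup>2) summable_on G \<and>
      c * (norm f)\<^sup>2 \<le> (\<Sum>\<^sub>\<infinity>g\<in>G. LINT t:Tc|lborel. (cmod (cinner J f (op_exp t A g)))\<^sup>2) \<and>
      (\<Sum>\<^sub>\<infinity>g\<in>G. LINT t:Tc|lborel. (cmod (cinner J f (op_exp t A g)))\<^sup>2) \<le> C * (norm f)\<^sup>2)"

end

theory Submission
  imports Defs
begin

lemma summable_Cauchy_rev:
  fixes f :: "nat \<Rightarrow> 'a::{real_normed_vector, complete_space}"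
  assumes r: "\<forall>e>0. \<exists>N. \<forall>m\<ge>N. \<forall>n. norm (sum f {m..<n}) < e"
  shows "summable f"
    unfolding summable_iff_convergent Cauchy_convergent_iff [symmetric] Cauchy_iff
  proof clarify
    fix e :: real
    assume "0 < e"
    from r \<open>0 < e\<close> obtain N where N0: "\<forall>m\<ge>N. \<forall>n. norm (sum f {m..<n}) < e"
      by auto
    have N: "\<And>m n. m \<ge> N \<Longrightarrow> norm (sum f {m..<n}) < e" using N0 by simp
    have "norm (sum f {..<m} - sum f {..<n}) < e" if "m\<ge>N" "n\<ge>N" for m n
    proof (cases m n rule: linorder_class.le_cases)
      assume "m \<le> n"
      show ?thesis
      proof -
        have "sum f {..<n} - sum f {..<m} = sum f {m..<n}"
          using sum_diff[of "{..<n}" "{..<m}" f] \<open>m \<le> n\<close> by (simp add: lessThan_minus_lessThan)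
        then have "norm (sum f {..<m} - sum f {..<n}) = norm (sum f {m..<n})"
          by (subst norm_minus_commute) (rule arg_cong[where f=norm])
        then show ?thesis using N[OF \<open>m\<ge>N\<close>, of n] by simp
      qed
    next
      assume "n \<le> m"
      show ?thesis
      proof -
        have "sum f {..<m} - sum f {..<n} = sum f {n..<m}"
          using sum_diff[of "{..<m}" "{..<n}" f] \<open>n \<le> m\<close> by (simp add: lessThan_minus_lessThan)
        then show ?thesis using N[OF \<open>n\<ge>N\<close>, of m] by simp
      qed
    qed
    then show "\<exists>M. \<forall>m\<ge>M. \<forall>n\<ge>M. norm (sum f {..<m} - sum f {..<n}) < e"
      by (intro exI[of _ N] allI impI)
  qed

lemma summable_norm_cancel':
  fixes f :: "nat \<Rightarrow> 'a::{real_normed_vector, complete_space}"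
  assumes "summable (\<lambda>n. norm (f n))" shows "summable f"
proof (rule summable_Cauchy_rev, intro allI impI)
  fix e :: real assume "e > 0"
  then obtain N where N: "\<forall>m\<ge>N. \<forall>n. norm (\<Sum>i=m..<n. norm (f i)) < e"
    using summable_Cauchy[THEN iffD1, OF assms, rule_format, OF \<open>e > 0\<close>] by (elim exE) (rule that)
  show "\<exists>N. \<forall>m\<ge>N. \<forall>n. norm (sum f {m..<n}) < e"
  proof (intro exI allI impI)
    fix m n assume "m \<ge> N"
    have "norm (sum f {m..<n}) \<le> (\<Sum>i=m..<n. norm (f i))" by (rule norm_sum)
    also have "\<dots> \<le> norm (\<Sum>i=m..<n. norm (f i))" by simp
    also have "\<dots> < e" using N \<open>m \<ge> N\<close> by blast
    finally show "norm (sum f {m..<n}) < e" .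
  qed
qed

lemma summable_norm':
  fixes f :: "nat \<Rightarrow> 'a::{real_normed_vector, complete_space}"
  assumes "summable (\<lambda>n. norm (f n))" shows "norm (suminf f) \<le> (\<Sum>n. norm (f n))"
proof -
  have s: "summable f" by (rule summable_norm_cancel'[OF assms])
  have 1: "(\<lambda>n. norm (\<Sum>i<n. f i)) \<longlonglongrightarrow> norm (suminf f)"
    by (rule tendsto_norm[OF summable_LIMSEQ[OF s]])
  have 2: "(\<lambda>n. \<Sum>i<n. norm (f i)) \<longlonglongrightarrow> (\<Sum>n. norm (f n))"
    by (rule summable_LIMSEQ[OF assms])
  have 3: "\<exists>N. \<forall>n\<ge>N. norm (\<Sum>i<n. f i) \<le> (\<Sum>i<n. norm (f i))"
    by (intro exI[of _ 0] allI impI norm_sum)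
  show ?thesis by (rule LIMSEQ_le[OF 1 2 3])
qed

lemma exp_sums_real: "(\<lambda>n. r ^ n / fact n) sums exp (r::real)"
  using exp_converges[of r] by (simp add: divide_inverse ac_simps)

lemma funpow_bl: fixes A :: "'a::real_normed_vector \<Rightarrow> 'a" assumes "bounded_linear A" shows "bounded_linear (A ^^ n)"
proof (induction n)
  case 0 
  have "A ^^ 0 = (\<lambda>x. x)" by (simp add: id_def)
  then show ?case by (simp only: bounded_linear_ident)
next
  case (Suc n)
  have "A ^^ Suc n = (\<lambda>x. A ((A ^^ n) x))" by (simp add: fun_eq_iff)
  then show ?case
    using bounded_linear_compose[OF assms Suc] by simp
qed

lemma funpow_norm:
  fixes A :: "'a::real_normed_vector \<Rightarrow> 'a"
  assumes "\<And>x. norm (A x) \<le> K * norm x" "K \<ge> 0"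
  shows "norm ((A ^^ n) x) \<le> K ^ n * norm x"
proof (induction n)
  case 0 then show ?case by simp
next
  case (Suc n)
  have "norm ((A ^^ Suc n) x) = norm (A ((A ^^ n) x))" by simp
  also have "\<dots> \<le> K * norm ((A ^^ n) x)" by (rule assms(1))
  also have "\<dots> \<le> K * (K ^ n * norm x)" using Suc assms(2) by (simp add: mult_left_mono)
  finally show ?case by simp
qed

lemma term_norm:
  fixes A :: "'a::real_normed_vector \<Rightarrow> 'a"
  assumes "\<And>x. norm (A x) \<le> K * norm x" "K \<ge> 0"
  shows "norm ((t ^ n / fact n) *\<^sub>R (A ^^ n) x) \<le> (\<bar>t\<bar> * K) ^ n / fact n * norm x"
proof -
  have "norm ((t ^ n / fact n) *\<^sub>R (A ^^ n) x) = \<bar>t\<bar> ^ n / fact n * norm ((A ^^ n) x)"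
    by (simp add: power_abs)
  also have "\<dots> \<le> \<bar>t\<bar> ^ n / fact n * (K ^ n * norm x)"
    by (intro mult_left_mono funpow_norm assms) auto
  finally show ?thesis by (simp add: power_mult_distrib)
qed

lemma term_summable:
  fixes A :: "'a::real_normed_vector \<Rightarrow> 'a"
  assumes "\<And>x. norm (A x) \<le> K * norm x" "K \<ge> 0"
  shows "summable (\<lambda>n. norm ((t ^ n / fact n) *\<^sub>R (A ^^ n) x))"
proof (rule summable_comparison_test[OF _ summable_mult2[OF sums_summable[OF exp_sums_real]]])
  show "\<exists>N. \<forall>n\<ge>N. norm (norm ((t ^ n / fact n) *\<^sub>R (A ^^ n) x)) \<le> (\<bar>t\<bar> * K) ^ n / fact n * norm x"
    using term_norm[OF assms] by auto
qed


locale expA =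
  fixes A :: "'a::{real_normed_vector, complete_space} \<Rightarrow> 'a" and K :: real
  assumes blA: "bounded_linear A" and bndA: "\<And>x. norm (A x) \<le> K * norm x" and K0: "K \<ge> 0"
begin

definition E :: "real \<Rightarrow> 'a \<Rightarrow> 'a" where "E t = op_exp t A"

lemma E_def': "E t x = (\<Sum>n. (t ^ n / fact n) *\<^sub>R (A ^^ n) x)"
  by (simp add: E_def op_exp_def)

lemma tsum: "summable (\<lambda>n. (t ^ n / fact n) *\<^sub>R (A ^^ n) x)"
  by (rule summable_norm_cancel'[OF term_summable[OF bndA K0]])

lemma E_norm: "norm (E t x) \<le> exp (\<bar>t\<bar> * K) * norm x"
proof -
  have "norm (E t x) \<le> (\<Sum>n. norm ((t ^ n / fact n) *\<^sub>R (A ^^ n) x))"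
    unfolding E_def' by (rule summable_norm'[OF term_summable[OF bndA K0]])
  also have "\<dots> \<le> (\<Sum>n. (\<bar>t\<bar> * K) ^ n / fact n * norm x)"
    by (rule suminf_le[OF term_norm[OF bndA K0] term_summable[OF bndA K0]
          summable_mult2[OF sums_summable[OF exp_sums_real]]])
  also have "\<dots> = exp (\<bar>t\<bar> * K) * norm x"
    using sums_unique[OF sums_mult2[OF exp_sums_real[of "\<bar>t\<bar> * K"], of "norm x"]] by simp
  finally show ?thesis .
qed

lemma E_add: "E t (x + y) = E t x + E t y"
proof -
  have "\<And>n. (A ^^ n) (x + y) = (A ^^ n) x + (A ^^ n) y"
    using linear_add[OF bounded_linear.linear[OF funpow_bl[OF blA]]] by blast
  then show ?thesis unfolding E_def' by (simp add: suminf_add[OF tsum tsum] scaleR_add_right)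
qed

lemma E_scaleR: "E t (c *\<^sub>R x) = c *\<^sub>R E t x"
proof -
  have "\<And>n. (A ^^ n) (c *\<^sub>R x) = c *\<^sub>R (A ^^ n) x"
    using linear_scale[OF bounded_linear.linear[OF funpow_bl[OF blA]]] by blast
  moreover have "c *\<^sub>R (\<Sum>n. (t ^ n / fact n) *\<^sub>R (A ^^ n) x) = (\<Sum>n. c *\<^sub>R ((t ^ n / fact n) *\<^sub>R (A ^^ n) x))"
    by (rule suminf_scaleR_right[OF tsum])
  ultimately show ?thesis unfolding E_def'
    by (simp add: scaleR_left_commute mult.commute)
qed

lemma E_bl: "bounded_linear (E t)"
  by (rule bounded_linear_intro[of _ "exp (\<bar>t\<bar> * K)"]) (auto simp: E_add E_scaleR intro: order_trans[OF E_norm] simp: ac_simps)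

lemma E_linear: "linear (E t)"
  using E_bl bounded_linear.linear by blast

lemma E_0: "E 0 x = x"
proof -
  have "(\<lambda>n. ((0::real) ^ n / fact n) *\<^sub>R (A ^^ n) x) = (\<lambda>n. if n = 0 then (A^^n) x else 0)"
    by (auto simp: fun_eq_iff)
  then show ?thesis unfolding E_def' using sums_unique[OF sums_single[of 0 "\<lambda>n. (A^^n) x"]]
    by simp
qed

lemma E_minus_id: "norm (E t x - x) \<le> (exp (\<bar>t\<bar> * K) - 1) * norm x"
proof -
  let ?f = "\<lambda>n. (t ^ n / fact n) *\<^sub>R (A ^^ n) x"
  let ?g = "\<lambda>n. (\<bar>t\<bar> * K) ^ n / fact n * norm x"
  have sg: "summable ?g" by (rule summable_mult2[OF sums_summable[OF exp_sums_real]])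
  have "E t x - x = (\<Sum>n. ?f (Suc n))"
    unfolding E_def' using suminf_split_head[OF tsum[of t x]] by simp
  also have "norm \<dots> \<le> (\<Sum>n. norm (?f (Suc n)))"
    by (rule summable_norm'[OF summable_Suc_iff[THEN iffD2, OF term_summable[OF bndA K0, of t x]]])
  also have "\<dots> \<le> (\<Sum>n. ?g (Suc n))"
    by (rule suminf_le[OF term_norm[OF bndA K0] summable_Suc_iff[THEN iffD2, OF term_summable[OF bndA K0, of t x]]
       summable_Suc_iff[THEN iffD2, OF sg]])
  also have "\<dots> = (\<Sum>n. ?g n) - ?g 0" by (rule suminf_split_head[OF sg])
  also have "(\<Sum>n. ?g n) = exp (\<bar>t\<bar> * K) * norm x"
    using sums_unique[OF sums_mult2[OF exp_sums_real[of "\<bar>t\<bar> * K"], of "norm x"]] by simp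
  finally show ?thesis by (simp add: algebra_simps)
qed

end

lemma double_series_diag:
  fixes c :: "nat \<Rightarrow> nat \<Rightarrow> 'a::{real_normed_vector, complete_space}"
  assumes bnd: "\<And>i j. norm (c i j) \<le> \<alpha> i * \<beta> j"
    and a0: "\<And>i. \<alpha> i \<ge> 0" and b0: "\<And>j. \<beta> j \<ge> 0"
    and a: "summable \<alpha>" and b: "summable \<beta>"
    and lim: "(\<lambda>n. \<Sum>i<n. \<Sum>j<n. c i j) \<longlonglongrightarrow> L"
  shows "(\<lambda>k. \<Sum>i\<le>k. c i (k - i)) sums L"
proof -
  let ?S1 = "\<lambda>n::nat. {..<n} \<times> {..<n}"
  let ?S2 = "\<lambda>n::nat. {(i,j). i + j < n}"
  have S1_mono: "\<And>m n. m \<le> n \<Longrightarrow> ?S1 m \<subseteq> ?S1 n" by auto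
  have S2_le_S1: "\<And>n. ?S2 n \<subseteq> ?S1 n" by auto
  have S1_le_S2: "\<And>n. ?S1 (n div 2) \<subseteq> ?S2 n" by auto
  have finite_S1: "\<And>n. finite (?S1 n)" by simp
  with S2_le_S1 have finite_S2: "\<And>n. finite (?S2 n)" by (rule finite_subset)
  let ?g = "\<lambda>(i,j). c i j"
  let ?f = "\<lambda>(i,j). \<alpha> i * \<beta> j"
  have f_nonneg: "\<And>x. 0 \<le> ?f x" using a0 b0 by (auto intro: mult_nonneg_nonneg)
  then have norm_sum_f: "\<And>A. norm (sum ?f A) = sum ?f A"
    unfolding real_norm_def
    by (simp only: abs_of_nonneg sum_nonneg [rule_format])
  have 1: "(\<lambda>n. sum ?g (?S1 n)) \<longlonglongrightarrow> L"
    using lim by (simp only: sum.cartesian_product split_def)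
  have "(\<lambda>n. (\<Sum>k<n. \<alpha> k) * (\<Sum>k<n. \<beta> k)) \<longlonglongrightarrow> (\<Sum>k. \<alpha> k) * (\<Sum>k. \<beta> k)"
    using a b by (intro tendsto_mult summable_LIMSEQ)
  then have "(\<lambda>n. sum ?f (?S1 n)) \<longlonglongrightarrow> (\<Sum>k. \<alpha> k) * (\<Sum>k. \<beta> k)"
    by (simp only: sum_product sum.Sigma [rule_format] finite_lessThan)
  then have "convergent (\<lambda>n. sum ?f (?S1 n))"
    by (rule convergentI)
  then have Cauchy: "Cauchy (\<lambda>n. sum ?f (?S1 n))"
    by (rule convergent_Cauchy)
  have "Zfun (\<lambda>n. sum ?f (?S1 n - ?S2 n)) sequentially"
  proof (rule ZfunI, simp only: eventually_sequentially norm_sum_f)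
    fix r :: real
    assume r: "0 < r"
    from CauchyD [OF Cauchy r] obtain N
      where "\<forall>m\<ge>N. \<forall>n\<ge>N. norm (sum ?f (?S1 m) - sum ?f (?S1 n)) < r" ..
    then have "\<And>m n. N \<le> n \<Longrightarrow> n \<le> m \<Longrightarrow> norm (sum ?f (?S1 m - ?S1 n)) < r"
      by (simp only: sum_diff finite_S1 S1_mono)
    then have N: "\<And>m n. N \<le> n \<Longrightarrow> n \<le> m \<Longrightarrow> sum ?f (?S1 m - ?S1 n) < r"
      by (simp only: norm_sum_f)
    show "\<exists>N. \<forall>n\<ge>N. sum ?f (?S1 n - ?S2 n) < r"
    proof (intro exI allI impI)
      fix n
      assume "2 * N \<le> n"
      then have n: "N \<le> n div 2" by simp
      have "sum ?f (?S1 n - ?S2 n) \<le> sum ?f (?S1 n - ?S1 (n div 2))"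
        by (intro sum_mono2 finite_Diff finite_S1 f_nonneg Diff_mono subset_refl S1_le_S2)
      also have "\<dots> < r"
        using n div_le_dividend by (rule N)
      finally show "sum ?f (?S1 n - ?S2 n) < r" .
    qed
  qed
  then have "Zfun (\<lambda>n. sum ?g (?S1 n - ?S2 n)) sequentially"
    apply (rule Zfun_le [rule_format])
    apply (simp only: norm_sum_f)
    apply (rule order_trans [OF norm_sum sum_mono])
    apply (auto simp add: bnd)
    done
  then have 2: "(\<lambda>n. sum ?g (?S1 n) - sum ?g (?S2 n)) \<longlonglongrightarrow> 0"
    unfolding tendsto_Zfun_iff diff_0_right
    by (simp only: sum_diff finite_S1 S2_le_S1)
  with 1 have "(\<lambda>n. sum ?g (?S2 n)) \<longlonglongrightarrow> L"
    by (rule Lim_transform2)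
  then show ?thesis
    by (simp only: sums_def sum.triangle_reindex)
qed


context expA
begin

lemma Apow_lin: "linear (A ^^ n)"
  using bounded_linear.linear[OF funpow_bl[OF blA]] .

lemma E_comp: "E s (E t x) = E (s + t) x"
proof -
  define a where "a i = s^i / fact i" for i
  define b where "b j = (t^j/fact j) *\<^sub>R (A^^j) x" for j
  define c where "c i j = a i *\<^sub>R (A^^i) (b j)" for i j
  define \<alpha> where "\<alpha> i = (\<bar>s\<bar>*K)^i / fact i" for i
  define \<beta> where "\<beta> j = (\<bar>t\<bar>*K)^j/fact j * norm x" for j
  have bnd: "norm (c i j) \<le> \<alpha> i * \<beta> j" for i j
  proof -
    have "norm (c i j) \<le> \<alpha> i * norm (b j)"
      using term_norm[OF bndA K0, of s i "b j"] by (simp add: c_def a_def \<alpha>_def)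
    also have "\<dots> \<le> \<alpha> i * \<beta> j"
      using term_norm[OF bndA K0, of t j x] by (intro mult_left_mono) (auto simp: b_def \<beta>_def \<alpha>_def K0)
    finally show ?thesis .
  qed
  have a0: "\<alpha> i \<ge> 0" for i using K0 by (simp add: \<alpha>_def)
  have b0: "\<beta> i \<ge> 0" for i using K0 by (simp add: \<beta>_def)
  have sa: "\<alpha> sums exp (\<bar>s\<bar>*K)" unfolding \<alpha>_def by (rule exp_sums_real)
  have sb: "summable \<beta>" unfolding \<beta>_def by (rule summable_mult2[OF sums_summable[OF exp_sums_real]])
  define y where "y n = (\<Sum>j<n. b j)" for n
  have yl: "y \<longlonglongrightarrow> E t x" unfolding y_def b_def E_def' by (rule summable_LIMSEQ[OF tsum])
  have eq: "(\<Sum>i<n. \<Sum>j<n. c i j) = (\<Sum>i<n. a i *\<^sub>R (A^^i) (E t x)) + (\<Sum>i<n. a i *\<^sub>R (A^^i) (y n - E t x))" for n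
    by (simp add: c_def y_def scaleR_sum_right linear_sum[OF Apow_lin] linear_diff[OF Apow_lin]
        sum.distrib[symmetric] algebra_simps)
  have l1: "(\<lambda>n. \<Sum>i<n. a i *\<^sub>R (A^^i) (E t x)) \<longlonglongrightarrow> E s (E t x)"
    unfolding a_def E_def'[of s] by (rule summable_LIMSEQ[OF tsum])
  have l2: "(\<lambda>n. \<Sum>i<n. a i *\<^sub>R (A^^i) (y n - E t x)) \<longlonglongrightarrow> 0"
  proof (rule Lim_null_comparison)
    show "\<forall>\<^sub>F n in sequentially. norm (\<Sum>i<n. a i *\<^sub>R (A^^i) (y n - E t x)) \<le> exp (\<bar>s\<bar>*K) * norm (y n - E t x)"
    proof (intro always_eventually allI)
      fix n
      have "norm (\<Sum>i<n. a i *\<^sub>R (A^^i) (y n - E t x)) \<le> (\<Sum>i<n. norm (a i *\<^sub>R (A^^i) (y n - E t x)))"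
        by (rule norm_sum)
      also have "\<dots> \<le> (\<Sum>i<n. \<alpha> i * norm (y n - E t x))"
        by (intro sum_mono) (use term_norm[OF bndA K0] in \<open>simp add: a_def \<alpha>_def\<close>)
      also have "\<dots> = (\<Sum>i<n. \<alpha> i) * norm (y n - E t x)" by (simp add: sum_distrib_right)
      also have "\<dots> \<le> exp (\<bar>s\<bar>*K) * norm (y n - E t x)"
        by (intro mult_right_mono) (use sum_le_suminf[OF sums_summable[OF sa], of "{..<n}"] a0 sums_unique[OF sa] in auto)
      finally show "norm (\<Sum>i<n. a i *\<^sub>R (A^^i) (y n - E t x)) \<le> exp (\<bar>s\<bar>*K) * norm (y n - E t x)" .
    qed
    have "(\<lambda>n. exp (\<bar>s\<bar>*K) * norm (y n - E t x)) \<longlonglongrightarrow> exp (\<bar>s\<bar>*K) * 0"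
      by (intro tendsto_mult tendsto_const tendsto_norm_zero LIM_zero yl)
    then show "(\<lambda>n. exp (\<bar>s\<bar>*K) * norm (y n - E t x)) \<longlonglongrightarrow> 0" by simp
  qed
  have lim: "(\<lambda>n. \<Sum>i<n. \<Sum>j<n. c i j) \<longlonglongrightarrow> E s (E t x)"
    unfolding eq using tendsto_add[OF l1 l2] by simp
  have ds: "(\<lambda>k. \<Sum>i\<le>k. c i (k - i)) sums E s (E t x)"
    by (rule double_series_diag[OF bnd a0 b0 sums_summable[OF sa] sb lim])
  have ck: "(\<Sum>i\<le>k. c i (k - i)) = ((s + t) ^ k / fact k) *\<^sub>R (A ^^ k) x" for k
  proof -
    have "(\<Sum>i\<le>k. c i (k - i)) = (\<Sum>i\<le>k. (s^i / fact i * (t^(k-i) / fact (k-i))) *\<^sub>R (A ^^ k) x)"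
    proof (rule sum.cong[OF refl])
      fix i assume "i \<in> {..k}"
      then have "(A^^i) ((A^^(k-i)) x) = (A ^^ k) x"
        by (metis atMost_iff comp_apply funpow_add le_add_diff_inverse)
      then show "c i (k - i) = (s^i / fact i * (t^(k-i) / fact (k-i))) *\<^sub>R (A ^^ k) x"
        by (simp add: c_def a_def b_def linear_scale[OF Apow_lin])
    qed
    also have "\<dots> = (\<Sum>i\<le>k. s^i / fact i * (t^(k-i) / fact (k-i))) *\<^sub>R (A ^^ k) x"
      by (simp add: scaleR_sum_left)
    also have "(\<Sum>i\<le>k. s^i / fact i * (t^(k-i) / fact (k-i))) = (s + t) ^ k / fact k"
      using exp_series_add_commuting[of s t k] by (simp add: divide_inverse ac_simps)
    finally show ?thesis .
  qed
  show ?thesis using ds unfolding ck E_def'[of "s+t"] by (simp add: sums_iff)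
qed

end

lemma cinner_sq: "(cmod (cinner J f y))\<^sup>2 = (inner f y)\<^sup>2 + (inner f (J y))\<^sup>2"
  by (simp add: cinner_def cmod_power2)

lemma cs_norm: assumes "complex_structure J" shows "norm (J x) = norm x"
proof -
  have "inner (J x) (J x) = inner x x" using assms by (simp add: complex_structure_def)
  then show ?thesis by (simp add: norm_eq_sqrt_inner)
qed

lemma cs_linear: assumes "complex_structure J" shows "linear J"
  using assms by (simp add: complex_structure_def)

lemma bessel_real:
  fixes J :: "'a::real_inner \<Rightarrow> 'a"
  assumes bs: "\<And>f. (\<lambda>g. (cmod (cinner J f g))\<^sup>2) summable_on G"
    and bb: "\<And>f. (\<Sum>\<^sub>\<infinity>g\<in>G. (cmod (cinner J f g))\<^sup>2) \<le> B * (norm f)\<^sup>2"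
    and B0: "B > 0"
    and lin: "linear X" and Xb: "\<And>x. norm (X x) \<le> L * norm x"
    and F: "finite F" "F \<subseteq> G"
  shows "(\<Sum>g\<in>F. (inner f (X g))\<^sup>2) \<le> B * L\<^sup>2 * (norm f)\<^sup>2"
proof -
  define S where "S = (\<Sum>g\<in>F. (inner f (X g))\<^sup>2)"
  define h where "h = (\<Sum>g\<in>F. inner f (X g) *\<^sub>R g)"
  have S0: "S \<ge> 0" unfolding S_def by (intro sum_nonneg) auto
  have "S = inner f (X h)"
    unfolding S_def h_def
    by (simp add: linear_sum[OF lin] linear_scale[OF lin] inner_sum_right power2_eq_square)
  also have "\<dots> \<le> norm f * norm (X h)" by (rule norm_cauchy_schwarz)
  also have "\<dots> \<le> norm f * (L * norm h)" by (intro mult_left_mono Xb) auto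
  finally have S1: "S \<le> norm f * (L * norm h)" .
  have hh: "(norm h)\<^sup>2 = (\<Sum>g\<in>F. inner f (X g) * inner h g)"
    unfolding power2_norm_eq_inner by (subst (2) h_def) (simp add: inner_sum_right)
  have "((norm h)\<^sup>2)\<^sup>2 \<le> S * (\<Sum>g\<in>F. (inner h g)\<^sup>2)"
    unfolding hh S_def by (rule Cauchy_Schwarz_ineq_sum)
  also have "(\<Sum>g\<in>F. (inner h g)\<^sup>2) \<le> (\<Sum>g\<in>F. (cmod (cinner J h g))\<^sup>2)"
    by (intro sum_mono) (simp add: cinner_sq)
  also have "\<dots> \<le> (\<Sum>\<^sub>\<infinity>g\<in>G. (cmod (cinner J h g))\<^sup>2)"
    by (rule finite_sum_le_infsum[OF bs F]) auto
  also have "\<dots> \<le> B * (norm h)\<^sup>2" by (rule bb)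
  finally have "((norm h)\<^sup>2)\<^sup>2 \<le> S * (B * (norm h)\<^sup>2)" using S0 by (simp add: mult_left_mono)
  then have hS: "(norm h)\<^sup>2 \<le> S * B"
  proof (cases "norm h = 0")
    case True then show ?thesis using S0 B0 by simp
  next
    case False
    then have "(norm h)\<^sup>2 > 0" by simp
    have "(norm h)\<^sup>2 * (norm h)\<^sup>2 \<le> (S * B) * (norm h)\<^sup>2"
      using \<open>((norm h)\<^sup>2)\<^sup>2 \<le> S * (B * (norm h)\<^sup>2)\<close> by (simp only: power2_eq_square[of "(norm h)\<^sup>2"] ac_simps)
    then show ?thesis using \<open>(norm h)\<^sup>2 > 0\<close> by (simp only: mult_le_cancel_right_pos)
  qed
  have "S\<^sup>2 \<le> (norm f * (L * norm h))\<^sup>2" using S1 S0 by (intro power_mono) auto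
  also have "\<dots> = (norm f)\<^sup>2 * L\<^sup>2 * (norm h)\<^sup>2" by (simp add: power_mult_distrib)
  also have "\<dots> \<le> (norm f)\<^sup>2 * L\<^sup>2 * (S * B)" by (intro mult_left_mono hS) auto
  finally have "S * S \<le> S * ((norm f)\<^sup>2 * L\<^sup>2 * B)" by (simp add: power2_eq_square ac_simps)
  then have "S \<le> (norm f)\<^sup>2 * L\<^sup>2 * B"
  proof (cases "S = 0")
    case True then show ?thesis using B0 by simp
  next
    case False then show ?thesis using S0 \<open>S * S \<le> _\<close> by (simp add: mult_le_cancel_left_pos)
  qed
  then show ?thesis unfolding S_def by (simp add: ac_simps)
qed


lemma bessel_fin:
  fixes J :: "'a::real_inner \<Rightarrow> 'a"
  assumes cs: "complex_structure J"
    and bs: "\<And>f. (\<lambda>g. (cmod (cinner J f g))\<^sup>2) summable_on G"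
    and bb: "\<And>f. (\<Sum>\<^sub>\<infinity>g\<in>G. (cmod (cinner J f g))\<^sup>2) \<le> B * (norm f)\<^sup>2"
    and B0: "B > 0"
    and lin: "linear X" and Xb: "\<And>x. norm (X x) \<le> L * norm x"
    and F: "finite F" "F \<subseteq> G"
  shows "(\<Sum>g\<in>F. (cmod (cinner J f (X g)))\<^sup>2) \<le> 2 * B * L\<^sup>2 * (norm f)\<^sup>2"
proof -
  have lin2: "linear (\<lambda>x. J (X x))"
    using linear_compose[OF lin cs_linear[OF cs]] by (simp add: o_def)
  have Xb2: "norm (J (X x)) \<le> L * norm x" for x using Xb cs_norm[OF cs] by simp
  have "(\<Sum>g\<in>F. (cmod (cinner J f (X g)))\<^sup>2) = (\<Sum>g\<in>F. (inner f (X g))\<^sup>2) + (\<Sum>g\<in>F. (inner f (J (X g)))\<^sup>2)"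
    by (simp add: cinner_sq sum.distrib)
  also have "\<dots> \<le> B * L\<^sup>2 * (norm f)\<^sup>2 + B * L\<^sup>2 * (norm f)\<^sup>2"
    by (intro add_mono bessel_real[OF bs bb B0 lin Xb F] bessel_real[OF bs bb B0 lin2 Xb2 F])
  finally show ?thesis by simp
qed

lemma bessel_inf:
  fixes J :: "'a::real_inner \<Rightarrow> 'a"
  assumes cs: "complex_structure J"
    and bs: "\<And>f. (\<lambda>g. (cmod (cinner J f g))\<^sup>2) summable_on G"
    and bb: "\<And>f. (\<Sum>\<^sub>\<infinity>g\<in>G. (cmod (cinner J f g))\<^sup>2) \<le> B * (norm f)\<^sup>2"
    and B0: "B > 0"
    and lin: "linear X" and Xb: "\<And>x. norm (X x) \<le> L * norm x"
  shows "(\<lambda>g. (cmod (cinner J f (X g)))\<^sup>2) summable_on G"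
    and "(\<Sum>\<^sub>\<infinity>g\<in>G. (cmod (cinner J f (X g)))\<^sup>2) \<le> 2 * B * L\<^sup>2 * (norm f)\<^sup>2"
proof -
  show sm: "(\<lambda>g. (cmod (cinner J f (X g)))\<^sup>2) summable_on G"
  proof (rule nonneg_bdd_above_summable_on)
    show "bdd_above (sum (\<lambda>g. (cmod (cinner J f (X g)))\<^sup>2) ` {F. F \<subseteq> G \<and> finite F})"
    proof (rule bdd_aboveI2)
      fix F assume "F \<in> {F. F \<subseteq> G \<and> finite F}"
      then have "finite F" "F \<subseteq> G" by auto
      then show "(\<Sum>g\<in>F. (cmod (cinner J f (X g)))\<^sup>2) \<le> 2 * B * L\<^sup>2 * (norm f)\<^sup>2"
        by (rule bessel_fin[OF cs bs bb B0 lin Xb])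
    qed
  qed simp
  show "(\<Sum>\<^sub>\<infinity>g\<in>G. (cmod (cinner J f (X g)))\<^sup>2) \<le> 2 * B * L\<^sup>2 * (norm f)\<^sup>2"
    by (rule infsum_le_finite_sums[OF sm]) (rule bessel_fin[OF cs bs bb B0 lin Xb])
qed

locale setting = expA A K
  for A :: "'a::{real_inner,complete_space} \<Rightarrow> 'a" and K :: real +
  fixes J :: "'a \<Rightarrow> 'a" and G :: "'a set" and B M \<omega> :: real
  assumes cs: "complex_structure J"
    and bs: "\<And>f. (\<lambda>g. (cmod (cinner J f g))\<^sup>2) summable_on G"
    and bb: "\<And>f. (\<Sum>\<^sub>\<infinity>g\<in>G. (cmod (cinner J f g))\<^sup>2) \<le> B * (norm f)\<^sup>2"
    and B0: "B > 0"
    and M1: "M \<ge> 1" and om: "\<omega> < 0"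
    and stab: "\<And>t. t \<ge> 0 \<Longrightarrow> onorm (E t) \<le> M * exp (\<omega> * t)"
begin

lemma Eb: "t \<ge> 0 \<Longrightarrow> norm (E t x) \<le> M * exp (\<omega> * t) * norm x"
  using onorm[OF E_bl, of t x] mult_right_mono[OF stab[of t] norm_ge_zero[of x]] by linarith

definition phi :: "'a \<Rightarrow> 'a \<Rightarrow> real \<Rightarrow> real" where
  "phi f g t = (cmod (cinner J f (E t g)))\<^sup>2"

lemma phi0: "phi f g t \<ge> 0" by (simp add: phi_def)

lemma bes_fin: "finite F \<Longrightarrow> F \<subseteq> G \<Longrightarrow> linear X \<Longrightarrow> (\<And>x. norm (X x) \<le> L * norm x) \<Longrightarrow>
   (\<Sum>g\<in>F. (cmod (cinner J f (X g)))\<^sup>2) \<le> 2 * B * L\<^sup>2 * (norm f)\<^sup>2"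
  using bessel_fin[OF cs bs bb B0] by blast

lemma bes_E_fin: "t \<ge> 0 \<Longrightarrow> finite F \<Longrightarrow> F \<subseteq> G \<Longrightarrow>
   (\<Sum>g\<in>F. phi f g t) \<le> 2 * B * M\<^sup>2 * exp (2 * \<omega> * t) * (norm f)\<^sup>2"
proof -
  assume t: "t \<ge> 0" and F: "finite F" "F \<subseteq> G"
  have "(\<Sum>g\<in>F. phi f g t) \<le> 2 * B * (M * exp (\<omega> * t))\<^sup>2 * (norm f)\<^sup>2"
    unfolding phi_def by (rule bes_fin[OF F E_linear Eb[OF t]])
  also have "(M * exp (\<omega> * t))\<^sup>2 = M\<^sup>2 * exp (2 * \<omega> * t)"
    by (simp add: power_mult_distrib exp_double[symmetric] mult.assoc)
  finally show ?thesis by (simp add: ac_simps)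
qed

end

lemma cs_bl: assumes "complex_structure J" shows "bounded_linear J"
proof -
  have l: "linear J" by (rule cs_linear[OF assms])
  show ?thesis
    by (rule bounded_linear_intro[of _ 1]) (auto simp: linear_add[OF l] linear_scale[OF l] cs_norm[OF assms])
qed

lemma exp_int:
  assumes "\<omega> < (0::real)"
  shows "set_integrable lborel {0..} (\<lambda>t. exp (2 * \<omega> * t))"
    and "(LINT t:{0..}|lborel. exp (2 * \<omega> * t)) = 1 / (- 2 * \<omega>)"
proof -
  have h: "((\<lambda>x::real. exp (-(-2*\<omega>)*x)) has_integral exp (-(-2*\<omega>)*0)/(-2*\<omega>)) {0..}"
    by (rule has_integral_exp_minus_to_infinity) (use assms in simp)
  then have h': "((\<lambda>x::real. exp (2*\<omega>*x)) has_integral 1/(-2*\<omega>)) {0..}" by simp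
  then have "(\<lambda>x::real. exp (2*\<omega>*x)) absolutely_integrable_on {0..}"
    by (intro nonnegative_absolutely_integrable_1) (auto simp: has_integral_integrable)
  then have "integrable lebesgue (\<lambda>x. indicator {0::real..} x *\<^sub>R exp (2*\<omega>*x))"
    by (simp add: set_integrable_def)
  then show si: "set_integrable lborel {0..} (\<lambda>t. exp (2 * \<omega> * t))"
    unfolding set_integrable_def by (subst (asm) integrable_completion) measurable
  show "(LINT t:{0..}|lborel. exp (2 * \<omega> * t)) = 1 / (- 2 * \<omega>)"
    using set_borel_integral_eq_integral(2)[OF si] integral_unique[OF h'] by simp
qed

context setting
begin

lemma E_diff: "norm (E t y - E t0 y) \<le> exp (\<bar>t0\<bar> * K) * ((exp (\<bar>t - t0\<bar> * K) - 1) * norm y)"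
proof -
  have "E t y - E t0 y = E t0 (E (t - t0) y - y)"
    using E_comp[of t0 "t - t0" y] linear_diff[OF E_linear[of t0]] by simp
  also have "norm \<dots> \<le> exp (\<bar>t0\<bar> * K) * norm (E (t - t0) y - y)" by (rule E_norm)
  also have "\<dots> \<le> exp (\<bar>t0\<bar> * K) * ((exp (\<bar>t - t0\<bar> * K) - 1) * norm y)"
    by (intro mult_left_mono E_minus_id) auto
  finally show ?thesis .
qed

lemma E_cont: "continuous_on UNIV (\<lambda>t. E t y)"
proof (intro continuous_at_imp_continuous_on ballI)
  fix t0 :: real
  have "((\<lambda>t. E t y - E t0 y) \<longlongrightarrow> 0) (at t0)"
  proof (rule Lim_null_comparison)
    show "\<forall>\<^sub>F t in at t0. norm (E t y - E t0 y) \<le> exp (\<bar>t0\<bar> * K) * ((exp (\<bar>t - t0\<bar> * K) - 1) * norm y)"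
      by (intro always_eventually allI E_diff)
    have "((\<lambda>t. exp (\<bar>t0\<bar> * K) * ((exp (\<bar>t - t0\<bar> * K) - 1) * norm y)) \<longlongrightarrow>
            exp (\<bar>t0\<bar> * K) * ((exp (\<bar>t0 - t0\<bar> * K) - 1) * norm y)) (at t0)"
      by (intro tendsto_intros)
    then show "((\<lambda>t. exp (\<bar>t0\<bar> * K) * ((exp (\<bar>t - t0\<bar> * K) - 1) * norm y)) \<longlongrightarrow> 0) (at t0)"
      by simp
  qed
  then show "isCont (\<lambda>t. E t y) t0" unfolding isCont_def by (simp add: LIM_zero_iff)
qed

lemma phi_eq: "phi f g t = (inner f (E t g))\<^sup>2 + (inner f (J (E t g)))\<^sup>2"
  by (simp add: phi_def cinner_sq)

lemma phi_cont: "continuous_on UNIV (phi f g)"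
proof -
  have c1: "continuous_on UNIV (\<lambda>t. E t g)" by (rule E_cont)
  have c2: "continuous_on UNIV (\<lambda>t. J (E t g))"
    using continuous_on_compose[OF c1 linear_continuous_on[OF cs_bl[OF cs]]] by (simp add: o_def)
  show ?thesis unfolding phi_eq[abs_def]
    by (intro continuous_intros c1 c2)
qed

lemma phi_meas[measurable]: "phi f g \<in> borel_measurable borel"
  by (rule borel_measurable_continuous_onI[OF phi_cont])

lemma phi_bound: "g \<in> G \<Longrightarrow> t \<ge> 0 \<Longrightarrow> phi f g t \<le> 2 * B * M\<^sup>2 * (norm f)\<^sup>2 * exp (2 * \<omega> * t)"
  using bes_E_fin[of t "{g}" f] by (simp add: ac_simps)

lemma phi_int: "g \<in> G \<Longrightarrow> set_integrable lborel {0..} (phi f g)"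
proof -
  assume g: "g \<in> G"
  have si: "set_integrable lborel {0..} (\<lambda>t. (2 * B * M\<^sup>2 * (norm f)\<^sup>2) * exp (2 * \<omega> * t))"
    using set_integrable_mult_right[OF exp_int(1)[OF om]] by blast
  show ?thesis
  proof (rule set_integrable_bound[OF si])
    show "set_borel_measurable lborel {0..} (phi f g)"
      unfolding set_borel_measurable_def by measurable
    show "AE x in lborel. x \<in> {0..} \<longrightarrow> norm (phi f g x) \<le> norm (2 * B * M\<^sup>2 * (norm f)\<^sup>2 * exp (2 * \<omega> * x))"
      using phi_bound[OF g] phi0 B0 by (auto intro!: AE_I2)
  qed
qed

end

context setting
begin

lemma disc_fin:
  fixes t :: "nat \<Rightarrow> real"
  assumes eps: "\<epsilon> > 0" and tge: "\<And>j. t j \<ge> \<epsilon> * real j"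
    and S: "finite S" "S \<subseteq> G \<times> range t"
  shows "sum (\<lambda>(g,s). phi f g s) S \<le> (2*B*M\<^sup>2/(1 - exp (2*\<omega>*\<epsilon>))) * (norm f)\<^sup>2"
proof -
  define F where "F = fst ` S"
  have F: "finite F" "F \<subseteq> G" using S by (auto simp: F_def)
  have "finite (snd ` S)" "snd ` S \<subseteq> range t" using S by auto
  then obtain C where C: "finite C" "snd ` S = t ` C" using finite_subset_image[of "snd ` S" t UNIV] by blast
  then obtain N where N: "\<forall>n\<in>C. n < N" using finite_nat_set_iff_bounded by blast
  have SS: "S \<subseteq> F \<times> t ` {..<N}"
  proof
    fix x assume "x \<in> S"
    then have "snd x \<in> t ` C" "fst x \<in> F" using C by (auto simp: F_def)
    then show "x \<in> F \<times> t ` {..<N}" using N by (cases x) auto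
  qed
  define r where "r = exp (2*\<omega>*\<epsilon>)"
  have r0: "0 < r" "r < 1" using om eps by (auto simp: r_def mult_pos_neg mult_neg_pos)
  define c where "c = 2*B*M\<^sup>2 * (norm f)\<^sup>2"
  have c0: "c \<ge> 0" using B0 by (simp add: c_def)
  have "sum (\<lambda>(g,s). phi f g s) S \<le> sum (\<lambda>(g,s). phi f g s) (F \<times> t ` {..<N})"
    by (rule sum_mono2) (use F SS phi0 in auto)
  also have "\<dots> = (\<Sum>s\<in>t ` {..<N}. \<Sum>g\<in>F. phi f g s)"
    by (simp add: sum.cartesian_product[symmetric] sum.swap[of _ F])
  also have "\<dots> \<le> (\<Sum>j<N. \<Sum>g\<in>F. phi f g (t j))"
    using sum_image_le[of "{..<N}" "\<lambda>s. \<Sum>g\<in>F. phi f g s" t] phi0 by (simp add: sum_nonneg o_def)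
  also have "\<dots> \<le> (\<Sum>j<N. c * r ^ j)"
  proof (rule sum_mono)
    fix j assume "j \<in> {..<N}"
    have tj: "t j \<ge> 0" using tge[of j] eps by (smt (verit) mult_nonneg_nonneg of_nat_0_le_iff)
    have "(\<Sum>g\<in>F. phi f g (t j)) \<le> 2 * B * M\<^sup>2 * exp (2 * \<omega> * t j) * (norm f)\<^sup>2"
      by (rule bes_E_fin[OF tj F])
    also have "\<dots> = c * exp (2 * \<omega> * t j)" by (simp add: c_def ac_simps)
    also have "exp (2 * \<omega> * t j) \<le> r ^ j"
    proof -
      have "2 * \<omega> * t j \<le> real j * (2*\<omega>*\<epsilon>)"
        using tge[of j] om by (simp add: algebra_simps mult_left_mono_neg)
      then have "exp (2 * \<omega> * t j) \<le> exp (real j * (2*\<omega>*\<epsilon>))" by simp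
      then show ?thesis by (simp add: r_def exp_of_nat_mult)
    qed
    then have "c * exp (2 * \<omega> * t j) \<le> c * r ^ j" by (rule mult_left_mono[OF _ c0])
    finally show "(\<Sum>g\<in>F. phi f g (t j)) \<le> c * r ^ j" .
  qed
  also have "\<dots> = c * ((1 - r ^ N) / (1 - r))"
    using r0 by (simp add: sum_distrib_left[symmetric] sum_gp_strict)
  also have "\<dots> \<le> c * (1 / (1 - r))"
    using r0 c0 by (intro mult_left_mono divide_right_mono) auto
  finally show ?thesis by (simp add: c_def r_def)
qed

lemma disc_upper:
  fixes t :: "nat \<Rightarrow> real"
  assumes eps: "\<epsilon> > 0" and tge: "\<And>j. t j \<ge> \<epsilon> * real j"
  shows "(\<lambda>(g,s). phi f g s) summable_on (G \<times> range t)"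
    and "(\<Sum>\<^sub>\<infinity>(g,s)\<in>G \<times> range t. phi f g s) \<le> (2*B*M\<^sup>2/(1 - exp (2*\<omega>*\<epsilon>))) * (norm f)\<^sup>2"
proof -
  show sm: "(\<lambda>(g,s). phi f g s) summable_on (G \<times> range t)"
  proof (rule nonneg_bdd_above_summable_on)
    show "bdd_above (sum (\<lambda>(g,s). phi f g s) ` {F. F \<subseteq> G \<times> range t \<and> finite F})"
    proof (rule bdd_aboveI2)
      fix S assume "S \<in> {F. F \<subseteq> G \<times> range t \<and> finite F}"
      then have "finite S" "S \<subseteq> G \<times> range t" by auto
      then show "sum (\<lambda>(g,s). phi f g s) S \<le> (2*B*M\<^sup>2/(1 - exp (2*\<omega>*\<epsilon>))) * (norm f)\<^sup>2"
        by (rule disc_fin[OF eps tge])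
    qed
  qed (auto simp: phi0)
  show "(\<Sum>\<^sub>\<infinity>(g,s)\<in>G \<times> range t. phi f g s) \<le> (2*B*M\<^sup>2/(1 - exp (2*\<omega>*\<epsilon>))) * (norm f)\<^sup>2"
    by (rule infsum_le_finite_sums[OF sm]) (rule disc_fin[OF eps tge])
qed

end

lemma elem_ineq:
  fixes a g :: real
  assumes a: "a > 0" and g: "0 \<le> g" "g \<le> 1"
  shows "g \<le> exp a / a * (1 - exp (- a * g))"
proof -
  have "1 + a * g \<le> exp (a * g)" by (rule exp_ge_add_one_self_aux) (use a g in simp)
  then have "a * g * exp (- (a * g)) \<le> 1 - exp (- (a * g))"
    by (simp add: exp_minus field_simps)
  moreover have "exp (- a) \<le> exp (- (a * g))" using a g by (simp add: mult_left_le)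
  then have "a * g * exp (- a) \<le> a * g * exp (- (a * g))"
    using a g by (intro mult_left_mono) auto
  ultimately have "a * g * exp (- a) \<le> 1 - exp (- (a * g))" by linarith
  then have "a * g \<le> exp a * (1 - exp (- (a * g)))"
    by (simp add: exp_minus field_simps)
  then show ?thesis using a by (simp add: field_simps)
qed

lemma integral_pieces:
  fixes t :: "nat \<Rightarrow> real" and h :: "real \<Rightarrow> real"
  assumes mono: "\<And>j. t j \<le> t (Suc j)" and c: "continuous_on UNIV h"
  shows "(\<Sum>j<N. integral {t j..t (Suc j)} h) = integral {t 0..t N} h"
proof (induction N)
  case 0 then show ?case by simp
next
  case (Suc N)
  have m: "t 0 \<le> t N" using mono by (induction N) (auto intro: order_trans)
  have "integral {t 0..t N} h + integral {t N..t (Suc N)} h = integral {t 0..t (Suc N)} h"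
    by (rule Henstock_Kurzweil_Integration.integral_combine[OF m mono])
       (rule integrable_continuous_interval[OF continuous_on_subset[OF c]], simp)
  then show ?case using Suc by simp
qed

lemma sq_add_le: "(p + q)\<^sup>2 \<le> 2 * p\<^sup>2 + 2 * (q::real)\<^sup>2"
proof -
  have "(p+q)\<^sup>2 + (p-q)\<^sup>2 = 2*p\<^sup>2 + 2*q\<^sup>2" by (simp add: power2_eq_square algebra_simps)
  moreover have "(p-q)\<^sup>2 \<ge> 0" by simp
  ultimately show ?thesis by linarith
qed

lemma cin_add:
  assumes "complex_structure J"
  shows "(cmod (cinner J f (x + y)))\<^sup>2 \<le> 2 * (cmod (cinner J f x))\<^sup>2 + 2 * (cmod (cinner J f y))\<^sup>2"
proof -
  have l: "linear J" by (rule cs_linear[OF assms])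
  have "(cmod (cinner J f (x + y)))\<^sup>2 = (inner f x + inner f y)\<^sup>2 + (inner f (J x) + inner f (J y))\<^sup>2"
    by (simp add: cinner_sq linear_add[OF l] inner_add_right)
  also have "\<dots> \<le> (2 * (inner f x)\<^sup>2 + 2 * (inner f y)\<^sup>2) + (2 * (inner f (J x))\<^sup>2 + 2 * (inner f (J y))\<^sup>2)"
    by (intro add_mono sq_add_le)
  also have "\<dots> = 2 * (cmod (cinner J f x))\<^sup>2 + 2 * (cmod (cinner J f y))\<^sup>2"
    by (simp add: cinner_sq algebra_simps)
  finally show ?thesis .
qed

context setting
begin

lemma pert:
  assumes u: "u \<ge> 0" and F: "finite F" "F \<subseteq> G"
  shows "(\<Sum>g\<in>F. phi f g s) \<le> 2 * (\<Sum>g\<in>F. phi f g u)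
           + 4 * B * M\<^sup>2 * exp (2 * \<omega> * u) * (exp (\<bar>s - u\<bar> * K) - 1)\<^sup>2 * (norm f)\<^sup>2"
proof -
  define D where "D y = E s y - E u y" for y
  define L where "L = M * exp (\<omega> * u) * (exp (\<bar>s - u\<bar> * K) - 1)"
  have linD: "linear D" unfolding D_def by (intro linear_compose_sub E_linear)
  have Db: "norm (D y) \<le> L * norm y" for y
  proof -
    have "D y = E u (E (s - u) y - y)"
      using E_comp[of u "s - u" y] linear_diff[OF E_linear[of u]] by (simp add: D_def)
    also have "norm \<dots> \<le> M * exp (\<omega> * u) * norm (E (s - u) y - y)" by (rule Eb[OF u])
    also have "\<dots> \<le> M * exp (\<omega> * u) * ((exp (\<bar>s - u\<bar> * K) - 1) * norm y)"
      by (intro mult_left_mono E_minus_id) (use M1 in auto)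
    finally show ?thesis by (simp add: L_def ac_simps)
  qed
  have "(\<Sum>g\<in>F. phi f g s) \<le> (\<Sum>g\<in>F. 2 * phi f g u + 2 * (cmod (cinner J f (D g)))\<^sup>2)"
  proof (rule sum_mono)
    fix g assume "g \<in> F"
    have "E s g = E u g + D g" by (simp add: D_def)
    then show "phi f g s \<le> 2 * phi f g u + 2 * (cmod (cinner J f (D g)))\<^sup>2"
      unfolding phi_def using cin_add[OF cs, of f "E u g" "D g"] by simp
  qed
  also have "\<dots> = 2 * (\<Sum>g\<in>F. phi f g u) + 2 * (\<Sum>g\<in>F. (cmod (cinner J f (D g)))\<^sup>2)"
    by (simp add: sum.distrib sum_distrib_left)
  also have "(\<Sum>g\<in>F. (cmod (cinner J f (D g)))\<^sup>2) \<le> 2 * B * L\<^sup>2 * (norm f)\<^sup>2"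
    by (rule bes_fin[OF F linD Db])
  finally have "(\<Sum>g\<in>F. phi f g s) \<le> 2 * (\<Sum>g\<in>F. phi f g u) + 2 * (2 * B * L\<^sup>2 * (norm f)\<^sup>2)"
    by simp
  moreover have "L\<^sup>2 = M\<^sup>2 * exp (2 * \<omega> * u) * (exp (\<bar>s - u\<bar> * K) - 1)\<^sup>2"
    by (simp add: L_def power_mult_distrib exp_double[symmetric] mult.assoc)
  ultimately show ?thesis by (simp add: ac_simps)
qed

lemma lint_lim:
  fixes t :: "nat \<Rightarrow> real"
  assumes g: "g \<in> G" and tl: "filterlim t at_top sequentially" and t0: "\<And>n. t n \<ge> 0"
  shows "(\<lambda>N. integral {0..t N} (phi f g)) \<longlonglongrightarrow> (LINT s:{0..}|lborel. phi f g s)"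
proof -
  have ul: "uniform_limit (UNIV::unit set) (\<lambda>b x. LINT y:{0..b}|lborel. phi f g y) (\<lambda>x. LINT y:{0..}|lborel. phi f g y) at_top"
    by (rule uniform_limit_set_lebesgue_integral_at_top[where g="phi f g"])
       (auto simp: phi_int[OF g] phi0 set_borel_measurable_def)
  have "((\<lambda>b. LINT y:{0..b}|lborel. phi f g y) \<longlongrightarrow> (LINT y:{0..}|lborel. phi f g y)) at_top"
    using tendsto_uniform_limitI[OF ul, of "()"] by simp
  then have "(\<lambda>N. LINT y:{0..t N}|lborel. phi f g y) \<longlonglongrightarrow> (LINT y:{0..}|lborel. phi f g y)"
    using filterlim_compose[OF _ tl] by blast
  moreover have "(LINT y:{0..t N}|lborel. phi f g y) = integral {0..t N} (phi f g)" for N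
    by (rule set_borel_integral_eq_integral(2)[OF borel_integrable_atLeastAtMost'[OF continuous_on_subset[OF phi_cont]]]) simp
  ultimately show ?thesis by simp
qed

end

context setting
begin

lemma t_lim:
  fixes t :: "nat \<Rightarrow> real"
  assumes eps: "\<epsilon> > 0" and tge: "\<And>j. t j \<ge> \<epsilon> * real j"
  shows "filterlim t at_top sequentially"
proof (rule filterlim_at_top_mono[OF filterlim_tendsto_pos_mult_at_top[OF tendsto_const eps filterlim_real_sequentially]])
  show "\<forall>\<^sub>F x in sequentially. \<epsilon> * real x \<le> t x" using tge by simp
qed

lemma sum_grid:
  fixes t :: "nat \<Rightarrow> real"
  assumes inj: "inj t" and F: "finite F" "F \<subseteq> G" and eps: "\<epsilon> > 0" and tge: "\<And>j. t j \<ge> \<epsilon> * real j"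
  shows "(\<Sum>j<N. \<Sum>g\<in>F. phi f g (t j)) \<le> (\<Sum>\<^sub>\<infinity>(g,s)\<in>G \<times> range t. phi f g s)"
proof -
  have "(\<Sum>j<N. \<Sum>g\<in>F. phi f g (t j)) = (\<Sum>s\<in>t ` {..<N}. \<Sum>g\<in>F. phi f g s)"
    using sum.reindex[of t "{..<N}" "\<lambda>s. \<Sum>g\<in>F. phi f g s"] inj_on_subset[OF inj] by (simp add: o_def)
  also have "\<dots> = sum (\<lambda>(g,s). phi f g s) (F \<times> t ` {..<N})"
    by (simp add: sum.cartesian_product[symmetric] sum.swap[of _ F])
  also have "\<dots> \<le> (\<Sum>\<^sub>\<infinity>(g,s)\<in>G \<times> range t. phi f g s)"
    by (rule finite_sum_le_infsum[OF disc_upper(1)[OF eps tge]]) (use F in \<open>auto simp: phi0\<close>)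
  finally show ?thesis .
qed

lemma low_ii:
  fixes t :: "nat \<Rightarrow> real"
  assumes t0: "t 0 = 0" and inc: "\<And>j. 0 < t (Suc j) - t j" "\<And>j. t (Suc j) - t j \<le> \<delta>"
    and d1: "\<delta> \<le> 1"
    and eps: "\<epsilon> > 0" and tge: "\<And>j. t j \<ge> \<epsilon> * real j"
    and eta: "exp (\<delta> * K) - 1 \<le> \<eta>"
    and IC: "(\<lambda>g. LINT s:{0..}|lborel. phi f g s) summable_on G"
  shows "(\<Sum>\<^sub>\<infinity>g\<in>G. LINT s:{0..}|lborel. phi f g s) \<le> 2 * \<delta> * (\<Sum>\<^sub>\<infinity>(g,s)\<in>G \<times> range t. phi f g s)
            + 4 * B * M\<^sup>2 * \<eta>\<^sup>2 * (exp (- 2 * \<omega>) / (- 2 * \<omega>)) * (norm f)\<^sup>2"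
    (is "_ \<le> ?R")
proof -
  define Sd where "Sd = (\<Sum>\<^sub>\<infinity>(g,s)\<in>G \<times> range t. phi f g s)"
  define a where "a = - 2 * \<omega>"
  have a0: "a > 0" using om by (simp add: a_def)
  define Kc where "Kc = exp a / a"
  have Kc0: "Kc \<ge> 0" using a0 by (simp add: Kc_def)
  have tnn: "t j \<ge> 0" for j using tge[of j] eps by (smt (verit) mult_nonneg_nonneg of_nat_0_le_iff)
  have smono: "strict_mono t" using inc(1) by (simp add: strict_mono_Suc_iff)
  have inj: "inj t" using strict_mono_imp_inj_on[OF smono] .
  have mono: "t j \<le> t (Suc j)" for j using inc(1)[of j] by simp
  have d0: "\<delta> \<ge> 0" using inc(1)[of 0] inc(2)[of 0] by linarith
  have eta0: "\<eta> \<ge> 0" using eta K0 inc(1)[of 0] inc(2)[of 0]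
    by (smt (verit) one_le_exp_iff mult_nonneg_nonneg)
  have key: "(\<Sum>g\<in>F. integral {0..t N} (phi f g)) \<le> ?R" if F: "finite F" "F \<subseteq> G" for F N
  proof -
    define h where "h s = (\<Sum>g\<in>F. phi f g s)" for s
    define P where "P j = (\<Sum>g\<in>F. phi f g (t j))" for j
    have P0: "P j \<ge> 0" for j unfolding P_def by (simp add: sum_nonneg phi0)
    have hc: "continuous_on UNIV h" unfolding h_def by (intro continuous_on_sum phi_cont) 
    have "(\<Sum>g\<in>F. integral {0..t N} (phi f g)) = integral {0..t N} h"
      unfolding h_def
      by (rule integral_sum[symmetric, OF F(1)]) (rule integrable_continuous_interval[OF continuous_on_subset[OF phi_cont]], simp)
    also have "\<dots> = (\<Sum>j<N. integral {t j..t (Suc j)} h)"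
      using integral_pieces[of t h N, OF mono hc] t0 by simp
    also have "\<dots> \<le> (\<Sum>j<N. (t (Suc j) - t j) * (2 * P j + 4 * B * M\<^sup>2 * \<eta>\<^sup>2 * (norm f)\<^sup>2 * exp (2 * \<omega> * t j)))"
    proof (rule sum_mono)
      fix j assume "j \<in> {..<N}"
      define c where "c = 2 * P j + 4 * B * M\<^sup>2 * \<eta>\<^sup>2 * (norm f)\<^sup>2 * exp (2 * \<omega> * t j)"
      have "integral {t j..t (Suc j)} h \<le> integral {t j..t (Suc j)} (\<lambda>_. c)"
      proof (rule integral_le)
        show "h integrable_on {t j..t (Suc j)}"
          by (rule integrable_continuous_interval[OF continuous_on_subset[OF hc]]) simp
        show "(\<lambda>_. c) integrable_on {t j..t (Suc j)}" by (rule integrable_const_ivl)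
        fix s assume s: "s \<in> {t j..t (Suc j)}"
        have "h s \<le> 2 * P j + 4 * B * M\<^sup>2 * exp (2 * \<omega> * t j) * (exp (\<bar>s - t j\<bar> * K) - 1)\<^sup>2 * (norm f)\<^sup>2"
          unfolding h_def P_def by (rule pert[OF tnn F])
        also have "(exp (\<bar>s - t j\<bar> * K) - 1)\<^sup>2 \<le> \<eta>\<^sup>2"
        proof (rule power_mono)
          have "\<bar>s - t j\<bar> \<le> \<delta>" using s inc(2)[of j] by auto
          then have "exp (\<bar>s - t j\<bar> * K) \<le> exp (\<delta> * K)" using K0 by (simp add: mult_right_mono)
          then show "exp (\<bar>s - t j\<bar> * K) - 1 \<le> \<eta>" using eta by linarith
          show "0 \<le> exp (\<bar>s - t j\<bar> * K) - 1" using K0 by simp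
        qed
        then have "4 * B * M\<^sup>2 * exp (2 * \<omega> * t j) * (exp (\<bar>s - t j\<bar> * K) - 1)\<^sup>2 * (norm f)\<^sup>2
                   \<le> 4 * B * M\<^sup>2 * exp (2 * \<omega> * t j) * \<eta>\<^sup>2 * (norm f)\<^sup>2"
          using B0 by (intro mult_right_mono mult_left_mono) auto
        finally show "h s \<le> c" by (simp add: c_def ac_simps)
      qed
      also have "\<dots> = (t (Suc j) - t j) * c" using mono[of j] by simp
      finally show "integral {t j..t (Suc j)} h \<le> (t (Suc j) - t j) * c" .
    qed
    also have "\<dots> = (\<Sum>j<N. (t (Suc j) - t j) * (2 * P j) + (4 * B * M\<^sup>2 * \<eta>\<^sup>2 * (norm f)\<^sup>2) * ((t (Suc j) - t j) * exp (2 * \<omega> * t j)))"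
      by (intro sum.cong refl) (simp only: distrib_left mult.left_commute)
    also have "\<dots> = (\<Sum>j<N. (t (Suc j) - t j) * (2 * P j))
                    + 4 * B * M\<^sup>2 * \<eta>\<^sup>2 * (norm f)\<^sup>2 * (\<Sum>j<N. (t (Suc j) - t j) * exp (2 * \<omega> * t j))"
      by (simp only: sum.distrib sum_distrib_left)
    finally have main: "(\<Sum>g\<in>F. integral {0..t N} (phi f g)) \<le> (\<Sum>j<N. (t (Suc j) - t j) * (2 * P j))
                    + 4 * B * M\<^sup>2 * \<eta>\<^sup>2 * (norm f)\<^sup>2 * (\<Sum>j<N. (t (Suc j) - t j) * exp (2 * \<omega> * t j))" .
    have "(\<Sum>j<N. (t (Suc j) - t j) * (2 * P j)) \<le> (\<Sum>j<N. \<delta> * (2 * P j))"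
      by (intro sum_mono mult_right_mono) (use inc(2) P0 in auto)
    also have "(\<Sum>j<N. \<delta> * (2 * P j)) = 2 * \<delta> * (\<Sum>j<N. P j)" by (simp add: sum_distrib_left ac_simps)
    finally have s1a: "(\<Sum>j<N. (t (Suc j) - t j) * (2 * P j)) \<le> 2 * \<delta> * (\<Sum>j<N. P j)" .
    have "(\<Sum>j<N. P j) \<le> Sd"
      unfolding P_def Sd_def by (rule sum_grid[OF inj F eps tge])
    then have s1: "(\<Sum>j<N. (t (Suc j) - t j) * (2 * P j)) \<le> 2 * \<delta> * Sd"
      using s1a d0 by (smt (verit) mult_left_mono)
    have s2: "(\<Sum>j<N. (t (Suc j) - t j) * exp (2 * \<omega> * t j)) \<le> Kc"
    proof -
      have "(\<Sum>j<N. (t (Suc j) - t j) * exp (2 * \<omega> * t j)) \<le> (\<Sum>j<N. Kc * (exp (2 * \<omega> * t j) - exp (2 * \<omega> * t (Suc j))))"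
      proof (rule sum_mono)
        fix j assume "j \<in> {..<N}"
        define d where "d = t (Suc j) - t j"
        have d: "0 \<le> d" "d \<le> 1" using inc[of j] d1 by (auto simp: d_def)
        have "d \<le> Kc * (1 - exp (- a * d))" using elem_ineq[OF a0 d] by (simp add: Kc_def)
        then have "d * exp (2 * \<omega> * t j) \<le> Kc * ((1 - exp (- a * d)) * exp (2 * \<omega> * t j))"
          unfolding mult.assoc[symmetric] by (intro mult_right_mono) auto
        also have "(1 - exp (- a * d)) * exp (2 * \<omega> * t j) = exp (2 * \<omega> * t j) - exp (2 * \<omega> * t (Suc j))"
          by (simp add: a_def d_def algebra_simps exp_add[symmetric])
        finally show "(t (Suc j) - t j) * exp (2 * \<omega> * t j) \<le> Kc * (exp (2 * \<omega> * t j) - exp (2 * \<omega> * t (Suc j)))"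
          by (simp add: d_def mult.assoc)
      qed
      also have "\<dots> = Kc * (exp (2 * \<omega> * t 0) - exp (2 * \<omega> * t N))"
        by (simp add: sum_distrib_left[symmetric] sum_lessThan_telescope'[of "\<lambda>j. exp (2 * \<omega> * t j)"])
      also have "\<dots> \<le> Kc" using t0 Kc0 by (simp add: mult_left_le)
      finally show ?thesis .
    qed
    have Q0: "4 * B * M\<^sup>2 * \<eta>\<^sup>2 * (norm f)\<^sup>2 \<ge> 0" using B0 by simp
    have "4 * B * M\<^sup>2 * \<eta>\<^sup>2 * (norm f)\<^sup>2 * (\<Sum>j<N. (t (Suc j) - t j) * exp (2 * \<omega> * t j))
          \<le> 4 * B * M\<^sup>2 * \<eta>\<^sup>2 * (norm f)\<^sup>2 * Kc"
      by (rule mult_left_mono[OF s2 Q0])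
    then show ?thesis using main s1 by (simp add: Sd_def Kc_def a_def ac_simps)
  qed
  have fin: "(\<Sum>g\<in>F. LINT s:{0..}|lborel. phi f g s) \<le> ?R" if F: "finite F" "F \<subseteq> G" for F
  proof (rule LIMSEQ_le_const2)
    show "(\<lambda>N. \<Sum>g\<in>F. integral {0..t N} (phi f g)) \<longlonglongrightarrow> (\<Sum>g\<in>F. LINT s:{0..}|lborel. phi f g s)"
      by (intro tendsto_sum lint_lim t_lim[OF eps tge] tnn) (use F in auto)
    show "\<exists>N. \<forall>n\<ge>N. (\<Sum>g\<in>F. integral {0..t n} (phi f g)) \<le> ?R" using key[OF F] by blast
  qed
  show ?thesis by (rule infsum_le_finite_sums[OF IC fin])
qed

end

context setting
begin

lemma IC_eq: "g \<in> G \<Longrightarrow> (LINT s:{0..}|lborel. phi f g s) = integral {0..} (phi f g)"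
  using set_borel_integral_eq_integral(2)[OF phi_int] by blast

lemma IC_integrable: "g \<in> G \<Longrightarrow> phi f g integrable_on {0..}"
  using set_borel_integral_eq_integral(1)[OF phi_int] by blast

lemma IC_nonneg: "g \<in> G \<Longrightarrow> (LINT s:{0..}|lborel. phi f g s) \<ge> 0"
  by (simp add: IC_eq IC_integrable integral_nonneg phi0)

lemma IC_fin_upper:
  assumes F: "finite F" "F \<subseteq> G"
  shows "(\<Sum>g\<in>F. LINT s:{0..}|lborel. phi f g s) \<le> (2 * B * M\<^sup>2 * (norm f)\<^sup>2) * (1 / (- 2 * \<omega>))"
proof -
  define C where "C = 2 * B * M\<^sup>2 * (norm f)\<^sup>2"
  have hexp: "((\<lambda>x::real. exp (2*\<omega>*x)) has_integral 1/(-2*\<omega>)) {0..}"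
    using has_integral_exp_minus_to_infinity[of "-2*\<omega>" 0] om by simp
  have hC: "((\<lambda>x::real. exp (2*\<omega>*x) * C) has_integral (1 / (- 2 * \<omega>) * C)) {0..}"
    by (rule has_integral_mult_left[OF hexp])
  have "(\<Sum>g\<in>F. LINT s:{0..}|lborel. phi f g s) = (\<Sum>g\<in>F. integral {0..} (phi f g))"
    using F by (intro sum.cong refl IC_eq) auto
  also have "\<dots> = integral {0..} (\<lambda>s. \<Sum>g\<in>F. phi f g s)"
    by (rule integral_sum[symmetric, OF F(1)]) (use F IC_integrable in auto)
  also have "\<dots> \<le> integral {0..} (\<lambda>x::real. exp (2*\<omega>*x) * C)"
  proof (rule integral_le)
    show "(\<lambda>s. \<Sum>g\<in>F. phi f g s) integrable_on {0..}"
      by (rule integrable_sum[OF F(1)]) (use F IC_integrable in auto)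
    show "(\<lambda>x::real. exp (2*\<omega>*x) * C) integrable_on {0..}" using hC by blast
    fix s :: real assume "s \<in> {0..}"
    then show "(\<Sum>g\<in>F. phi f g s) \<le> exp (2 * \<omega> * s) * C"
      using bes_E_fin[of s F f] F by (simp add: C_def ac_simps)
  qed
  also have "\<dots> = 1 / (- 2 * \<omega>) * C" using hC by (rule integral_unique)
  finally show ?thesis by (simp add: C_def ac_simps)
qed

lemma IC_upper:
  shows "(\<lambda>g. LINT s:{0..}|lborel. phi f g s) summable_on G"
    and "(\<Sum>\<^sub>\<infinity>g\<in>G. LINT s:{0..}|lborel. phi f g s) \<le> (2 * B * M\<^sup>2 * (norm f)\<^sup>2) * (1 / (- 2 * \<omega>))"
proof -
  show sm: "(\<lambda>g. LINT s:{0..}|lborel. phi f g s) summable_on G"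
  proof (rule nonneg_bdd_above_summable_on)
    show "bdd_above (sum (\<lambda>g. LINT s:{0..}|lborel. phi f g s) ` {F. F \<subseteq> G \<and> finite F})"
    proof (rule bdd_aboveI2)
      fix F assume "F \<in> {F. F \<subseteq> G \<and> finite F}"
      then have "finite F" "F \<subseteq> G" by auto
      then show "(\<Sum>g\<in>F. LINT s:{0..}|lborel. phi f g s) \<le> (2 * B * M\<^sup>2 * (norm f)\<^sup>2) * (1 / (- 2 * \<omega>))"
        by (rule IC_fin_upper)
    qed
  qed (rule IC_nonneg)
  show "(\<Sum>\<^sub>\<infinity>g\<in>G. LINT s:{0..}|lborel. phi f g s) \<le> (2 * B * M\<^sup>2 * (norm f)\<^sup>2) * (1 / (- 2 * \<omega>))"
    by (rule infsum_le_finite_sums[OF sm]) (rule IC_fin_upper)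
qed

end

lemma fin_cover:
  fixes t :: "nat \<Rightarrow> real"
  assumes S: "finite S" "S \<subseteq> G \<times> range t"
  shows "\<exists>F N. finite F \<and> F \<subseteq> G \<and> S \<subseteq> F \<times> t ` {..<N}"
proof -
  define F where "F = fst ` S"
  have F: "finite F" "F \<subseteq> G" using S by (auto simp: F_def)
  have "finite (snd ` S)" "snd ` S \<subseteq> range t" using S by auto
  then obtain C where C: "finite C" "snd ` S = t ` C" using finite_subset_image[of "snd ` S" t UNIV] by blast
  then obtain N where N: "\<forall>n\<in>C. n < N" using finite_nat_set_iff_bounded by blast
  have SS: "S \<subseteq> F \<times> t ` {..<N}"
  proof
    fix x assume "x \<in> S"
    then have "snd x \<in> t ` C" "fst x \<in> F" using C by (auto simp: F_def)
    then show "x \<in> F \<times> t ` {..<N}" using N by (cases x) auto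
  qed
  show ?thesis using F SS by blast
qed

context setting
begin

lemma grid_eq:
  fixes t :: "nat \<Rightarrow> real"
  assumes inj: "inj t"
  shows "(\<Sum>j<N. \<Sum>g\<in>F. phi f g (t j)) = sum (\<lambda>(g,s). phi f g s) (F \<times> t ` {..<N})"
proof -
  have "(\<Sum>j<N. \<Sum>g\<in>F. phi f g (t j)) = (\<Sum>s\<in>t ` {..<N}. \<Sum>g\<in>F. phi f g s)"
    using sum.reindex[of t "{..<N}" "\<lambda>s. \<Sum>g\<in>F. phi f g s"] inj_on_subset[OF inj] by (simp add: o_def)
  also have "\<dots> = sum (\<lambda>(g,s). phi f g s) (F \<times> t ` {..<N})"
    by (simp add: sum.cartesian_product[symmetric] sum.swap[of _ F])
  finally show ?thesis .
qed

lemma low_iii: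
  assumes h0: "0 < h" "h \<le> 1"
  shows "h * (\<Sum>\<^sub>\<infinity>(g,s)\<in>G \<times> range (\<lambda>j. real j * h). phi f g s) \<le> 2 * (\<Sum>\<^sub>\<infinity>g\<in>G. LINT s:{0..}|lborel. phi f g s)
          + 4 * B * M\<^sup>2 * (exp (h * K) - 1)\<^sup>2 * (exp (- 2 * \<omega>) / (- 2 * \<omega>)) * (norm f)\<^sup>2"
    (is "h * ?Sd \<le> ?R")
proof -
  define t where "t j = real j * h" for j
  define Sc where "Sc = (\<Sum>\<^sub>\<infinity>g\<in>G. LINT s:{0..}|lborel. phi f g s)"
  define \<eta> where "\<eta> = exp (h * K) - 1"
  define a where "a = - 2 * \<omega>"
  have a0: "a > 0" using om by (simp add: a_def)
  define Kc where "Kc = exp a / a"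
  have Kc0: "Kc \<ge> 0" using a0 by (simp add: Kc_def)
  define Q where "Q = 4 * B * M\<^sup>2 * \<eta>\<^sup>2 * (norm f)\<^sup>2"
  have Q0: "Q \<ge> 0" using B0 by (simp add: Q_def)
  have tnn: "t j \<ge> 0" for j using h0 by (simp add: t_def)
  have tge: "t j \<ge> h * real j" for j by (simp add: t_def)
  have tS: "t (Suc j) = t j + h" for j by (simp add: t_def algebra_simps)
  have inj: "inj t" using h0 by (auto simp: t_def inj_on_def)
  have mono: "t j \<le> t (Suc j)" for j using tS h0 by simp
  have ICs: "(\<lambda>g. LINT s:{0..}|lborel. phi f g s) summable_on G" by (rule IC_upper(1))
  have key: "h * (\<Sum>j<N. \<Sum>g\<in>F. phi f g (t j)) \<le> 2 * Sc + Q * Kc" if F: "finite F" "F \<subseteq> G" for F N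
  proof -
    define H where "H s = (\<Sum>g\<in>F. phi f g s)" for s
    define P where "P j = (\<Sum>g\<in>F. phi f g (t j))" for j
    have hc: "continuous_on UNIV H" unfolding H_def by (intro continuous_on_sum phi_cont)
    have piece: "h * P j \<le> 2 * integral {t j..t (Suc j)} H + Q * (h * exp (2 * \<omega> * t j))" for j
    proof -
      define c where "c = (P j - Q * exp (2 * \<omega> * t j)) / 2"
      have "integral {t j..t (Suc j)} (\<lambda>_. c) \<le> integral {t j..t (Suc j)} H"
      proof (rule integral_le)
        show "H integrable_on {t j..t (Suc j)}"
          by (rule integrable_continuous_interval[OF continuous_on_subset[OF hc]]) simp
        show "(\<lambda>_. c) integrable_on {t j..t (Suc j)}" by (rule integrable_const_ivl)
        fix s assume s: "s \<in> {t j..t (Suc j)}"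
        have s0: "s \<ge> 0" using s tnn[of j] by auto
        have "P j \<le> 2 * H s + 4 * B * M\<^sup>2 * exp (2 * \<omega> * s) * (exp (\<bar>t j - s\<bar> * K) - 1)\<^sup>2 * (norm f)\<^sup>2"
          unfolding P_def H_def by (rule pert[OF s0 F])
        also have "4 * B * M\<^sup>2 * exp (2 * \<omega> * s) * (exp (\<bar>t j - s\<bar> * K) - 1)\<^sup>2 * (norm f)\<^sup>2
                   \<le> Q * exp (2 * \<omega> * t j)"
        proof -
          have e1: "exp (2 * \<omega> * s) \<le> exp (2 * \<omega> * t j)"
            using s om by (simp add: mult_left_mono_neg)
          have "\<bar>t j - s\<bar> \<le> h" using s tS[of j] by auto
          then have "exp (\<bar>t j - s\<bar> * K) \<le> exp (h * K)" using K0 by (simp add: mult_right_mono)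
          then have e2: "(exp (\<bar>t j - s\<bar> * K) - 1)\<^sup>2 \<le> \<eta>\<^sup>2"
            unfolding \<eta>_def by (intro power_mono) (use K0 in auto)
          have "exp (2 * \<omega> * s) * (exp (\<bar>t j - s\<bar> * K) - 1)\<^sup>2 \<le> exp (2 * \<omega> * t j) * \<eta>\<^sup>2"
            by (intro mult_mono e1 e2) auto
          then have "(4 * B * M\<^sup>2 * (norm f)\<^sup>2) * (exp (2 * \<omega> * s) * (exp (\<bar>t j - s\<bar> * K) - 1)\<^sup>2)
                      \<le> (4 * B * M\<^sup>2 * (norm f)\<^sup>2) * (exp (2 * \<omega> * t j) * \<eta>\<^sup>2)"
            by (rule mult_left_mono) (use B0 in simp)
          then show ?thesis by (simp add: Q_def ac_simps)
        qed
        finally show "c \<le> H s" by (simp add: c_def)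
      qed
      also have "integral {t j..t (Suc j)} (\<lambda>_. c) = h * c" using tS[of j] h0 by simp
      finally show ?thesis by (simp add: c_def algebra_simps)
    qed
    have "h * (\<Sum>j<N. P j) = (\<Sum>j<N. h * P j)" by (simp add: sum_distrib_left)
    also have "\<dots> \<le> (\<Sum>j<N. 2 * integral {t j..t (Suc j)} H + Q * (h * exp (2 * \<omega> * t j)))"
      by (intro sum_mono piece)
    also have "\<dots> = 2 * (\<Sum>j<N. integral {t j..t (Suc j)} H) + Q * (\<Sum>j<N. h * exp (2 * \<omega> * t j))"
      by (simp add: sum.distrib sum_distrib_left)
    finally have main: "h * (\<Sum>j<N. P j) \<le> 2 * (\<Sum>j<N. integral {t j..t (Suc j)} H) + Q * (\<Sum>j<N. h * exp (2 * \<omega> * t j))" .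
    have "(\<Sum>j<N. integral {t j..t (Suc j)} H) = integral {0..t N} H"
      using integral_pieces[of t H N, OF mono hc] by (simp add: t_def)
    also have "\<dots> = (\<Sum>g\<in>F. integral {0..t N} (phi f g))"
      unfolding H_def
      by (rule integral_sum[OF F(1)]) (rule integrable_continuous_interval[OF continuous_on_subset[OF phi_cont]], simp)
    also have "\<dots> \<le> (\<Sum>g\<in>F. integral {0..} (phi f g))"
    proof (rule sum_mono)
      fix g assume g: "g \<in> F"
      show "integral {0..t N} (phi f g) \<le> integral {0..} (phi f g)"
      proof (rule integral_subset_le)
        show "phi f g integrable_on {0..t N}"
          by (rule integrable_continuous_interval[OF continuous_on_subset[OF phi_cont]]) simp
        show "phi f g integrable_on {0..}" using IC_integrable g F by blast
      qed (auto simp: phi0)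
    qed
    also have "\<dots> = (\<Sum>g\<in>F. LINT s:{0..}|lborel. phi f g s)"
      using F by (intro sum.cong refl IC_eq[symmetric]) auto
    also have "\<dots> \<le> Sc"
      unfolding Sc_def by (rule finite_sum_le_infsum[OF ICs F]) (auto intro: IC_nonneg)
    finally have s1: "(\<Sum>j<N. integral {t j..t (Suc j)} H) \<le> Sc" .
    have s2: "(\<Sum>j<N. h * exp (2 * \<omega> * t j)) \<le> Kc"
    proof -
      have "(\<Sum>j<N. h * exp (2 * \<omega> * t j)) \<le> (\<Sum>j<N. Kc * (exp (2 * \<omega> * t j) - exp (2 * \<omega> * t (Suc j))))"
      proof (rule sum_mono)
        fix j assume "j \<in> {..<N}"
        have d: "0 \<le> h" "h \<le> 1" using h0 by auto
        have "h \<le> Kc * (1 - exp (- a * h))" using elem_ineq[OF a0 d] by (simp add: Kc_def)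
        then have "h * exp (2 * \<omega> * t j) \<le> Kc * ((1 - exp (- a * h)) * exp (2 * \<omega> * t j))"
          unfolding mult.assoc[symmetric] by (intro mult_right_mono) auto
        also have "(1 - exp (- a * h)) * exp (2 * \<omega> * t j) = exp (2 * \<omega> * t j) - exp (2 * \<omega> * t (Suc j))"
          by (simp add: a_def tS algebra_simps exp_add[symmetric])
        finally show "h * exp (2 * \<omega> * t j) \<le> Kc * (exp (2 * \<omega> * t j) - exp (2 * \<omega> * t (Suc j)))" .
      qed
      also have "\<dots> = Kc * (exp (2 * \<omega> * t 0) - exp (2 * \<omega> * t N))"
        by (simp add: sum_distrib_left[symmetric] sum_lessThan_telescope'[of "\<lambda>j. exp (2 * \<omega> * t j)"])
      also have "\<dots> \<le> Kc" using Kc0 by (simp add: t_def mult_left_le)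
      finally show ?thesis .
    qed
    have "Q * (\<Sum>j<N. h * exp (2 * \<omega> * t j)) \<le> Q * Kc" by (rule mult_left_mono[OF s2 Q0])
    then show ?thesis using main s1 by (simp add: P_def)
  qed
  have sm: "(\<lambda>(g,s). phi f g s) summable_on (G \<times> range t)"
    by (rule disc_upper(1)[OF h0(1) tge])
  have "?Sd \<le> (2 * Sc + Q * Kc) / h"
    unfolding t_def[symmetric]
  proof (rule infsum_le_finite_sums[OF sm])
    fix S assume S: "finite S" "S \<subseteq> G \<times> range t"
    obtain F N where FN: "finite F" "F \<subseteq> G" "S \<subseteq> F \<times> t ` {..<N}" using fin_cover[OF S] by blast
    have "sum (\<lambda>(g,s). phi f g s) S \<le> sum (\<lambda>(g,s). phi f g s) (F \<times> t ` {..<N})"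
      by (rule sum_mono2) (use FN phi0 in auto)
    also have "\<dots> = (\<Sum>j<N. \<Sum>g\<in>F. phi f g (t j))" by (rule grid_eq[OF inj, symmetric])
    also have "\<dots> \<le> (2 * Sc + Q * Kc) / h"
      using key[OF FN(1,2), of N] h0 by (simp add: field_simps)
    finally show "sum (\<lambda>(g,s). phi f g s) S \<le> (2 * Sc + Q * Kc) / h" .
  qed
  then have "h * ?Sd \<le> 2 * Sc + Q * Kc" using h0 by (simp add: field_simps)
  then show ?thesis by (simp add: Sc_def Q_def Kc_def a_def \<eta>_def ac_simps)
qed

end

lemma expm1_le: assumes "(0::real) \<le> x" shows "exp x - 1 \<le> x * exp x"
proof -
  have "1 + (- x) \<le> exp (- x)" by (rule exp_ge_add_one_self)
  then have "(1 - x) * exp x \<le> exp (- x) * exp x" by (intro mult_right_mono) auto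
  then have "(1 - x) * exp x \<le> 1" by (simp add: exp_minus)
  then show ?thesis by (simp add: algebra_simps)
qed

context setting
begin

lemma phi_fun: "(\<lambda>t. (cmod (cinner J f (op_exp t A g)))\<^sup>2) = phi f g"
  by (simp add: fun_eq_iff phi_def E_def)

lemma ff_fun: "(\<lambda>k. (cmod (cinner J f ((\<lambda>(g, s). op_exp s A g) k)))\<^sup>2) = (\<lambda>(g,s). phi f g s)"
  by (auto simp: fun_eq_iff phi_def E_def)

lemma sf_iff: "semicont_frame J A G {0..} \<longleftrightarrow> (\<exists>c>0. \<exists>C>0. \<forall>f.
      (\<forall>g\<in>G. set_integrable lborel {0..} (phi f g)) \<and>
      (\<lambda>g. LINT t:{0..}|lborel. phi f g t) summable_on G \<and>
      c * (norm f)\<^sup>2 \<le> (\<Sum>\<^sub>\<infinity>g\<in>G. LINT t:{0..}|lborel. phi f g t) \<and>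
      (\<Sum>\<^sub>\<infinity>g\<in>G. LINT t:{0..}|lborel. phi f g t) \<le> C * (norm f)\<^sup>2)"
  unfolding semicont_frame_def phi_fun ..

lemma ff_iff: "frame_family J (\<lambda>(g, s). op_exp s A g) I \<longleftrightarrow> (\<exists>c>0. \<exists>C>0. \<forall>f.
      (\<lambda>(g,s). phi f g s) summable_on I \<and>
      c * (norm f)\<^sup>2 \<le> (\<Sum>\<^sub>\<infinity>(g,s)\<in>I. phi f g s) \<and>
      (\<Sum>\<^sub>\<infinity>(g,s)\<in>I. phi f g s) \<le> C * (norm f)\<^sup>2)"
  unfolding frame_family_def ff_fun ..

end

lemma sep_growth:
  fixes t :: "nat \<Rightarrow> real"
  assumes us: "uniformly_separated (range t)" and t0: "t 0 = 0" and inc: "\<And>j. 0 < t (Suc j) - t j"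
  obtains \<epsilon> where "\<epsilon> > 0" "\<And>j. t j \<ge> \<epsilon> * real j"
proof -
  obtain \<epsilon> where e: "\<epsilon> > 0" and sep: "\<forall>x\<in>range t. \<forall>y\<in>range t. x \<noteq> y \<longrightarrow> \<epsilon> \<le> \<bar>x - y\<bar>"
    using us unfolding uniformly_separated_def by blast
  have step: "t (Suc j) - t j \<ge> \<epsilon>" for j
  proof -
    have "t (Suc j) \<noteq> t j" using inc[of j] by simp
    then have "\<epsilon> \<le> \<bar>t (Suc j) - t j\<bar>" using sep by blast
    then show ?thesis using inc[of j] by simp
  qed
  have "t j \<ge> \<epsilon> * real j" for j
  proof (induction j)
    case 0 then show ?case using t0 by simp
  next
    case (Suc j) then show ?case using step[of j] by (simp add: algebra_simps)
  qed
  then show ?thesis using that e by blast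
qed

context setting
begin

lemma I_II:
  assumes K: "K > 0" and I: "semicont_frame J A G {0..}"
  shows "\<exists>\<delta>>0. \<forall>t :: nat \<Rightarrow> real.
              (uniformly_separated (range t) \<and> t 0 = 0 \<and>
               (\<forall>j. 0 < t (Suc j) - t j \<and> t (Suc j) - t j < \<delta>))
              \<longrightarrow> frame_family J (\<lambda>(g, s). op_exp s A g) (G \<times> range t)"
proof -
  obtain c C where c: "c > 0" and cf: "\<And>f. (\<forall>g\<in>G. set_integrable lborel {0..} (phi f g)) \<and>
      (\<lambda>g. LINT t:{0..}|lborel. phi f g t) summable_on G \<and>
      c * (norm f)\<^sup>2 \<le> (\<Sum>\<^sub>\<infinity>g\<in>G. LINT t:{0..}|lborel. phi f g t) \<and>
      (\<Sum>\<^sub>\<infinity>g\<in>G. LINT t:{0..}|lborel. phi f g t) \<le> C * (norm f)\<^sup>2"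
    using I unfolding sf_iff by blast
  define Kc where "Kc = exp (- 2 * \<omega>) / (- 2 * \<omega>)"
  have Kc0: "Kc > 0" using om unfolding Kc_def by (intro divide_pos_pos) auto
  define \<eta> where "\<eta> = sqrt (c / (8 * B * M\<^sup>2 * Kc))"
  have M0: "M > 0" using M1 by simp
  have eta0: "\<eta> > 0" using c B0 M0 Kc0 by (simp add: \<eta>_def)
  have eta2: "4 * B * M\<^sup>2 * \<eta>\<^sup>2 * Kc = c / 2"
    using c B0 M0 Kc0 by (simp add: \<eta>_def)
  define \<delta> where "\<delta> = min 1 (\<eta> / (K * exp K))"
  have d0: "\<delta> > 0" using eta0 K by (simp add: \<delta>_def)
  have d1: "\<delta> \<le> 1" by (simp add: \<delta>_def)
  have deta: "exp (\<delta> * K) - 1 \<le> \<eta>"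
  proof -
    have "exp (\<delta> * K) - 1 \<le> \<delta> * K * exp (\<delta> * K)" by (rule expm1_le) (use d0 K in simp)
    also have "\<dots> \<le> \<delta> * K * exp K" using d1 d0 K by (intro mult_left_mono) (auto simp: mult_left_le_one_le)
    also have "\<dots> \<le> (\<eta> / (K * exp K)) * K * exp K"
      using K by (intro mult_right_mono) (auto simp: \<delta>_def)
    also have "\<dots> = \<eta>" using K by simp
    finally show ?thesis .
  qed
  show ?thesis
  proof (intro exI[of _ \<delta>] conjI allI impI d0)
    fix t :: "nat \<Rightarrow> real"
    assume H: "uniformly_separated (range t) \<and> t 0 = 0 \<and> (\<forall>j. 0 < t (Suc j) - t j \<and> t (Suc j) - t j < \<delta>)"
    then have us: "uniformly_separated (range t)" and t0: "t 0 = 0"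
      and inc1: "\<And>j. 0 < t (Suc j) - t j" by auto
    have inc2: "\<And>j. t (Suc j) - t j \<le> \<delta>" using H less_imp_le by blast
    obtain \<epsilon> where eps: "\<epsilon> > 0" and tge: "\<And>j. t j \<ge> \<epsilon> * real j"
      using sep_growth[OF us t0 inc1] by blast
    have r1: "exp (2 * \<omega> * \<epsilon>) < 1" using om eps by (simp add: mult_pos_neg mult_neg_pos)
    have cpos: "c / (4 * \<delta>) > 0" using c d0 by simp
    have Cpos: "2*B*M\<^sup>2/(1 - exp (2*\<omega>*\<epsilon>)) > 0" using B0 M0 r1 by simp
    have all: "\<forall>f. (\<lambda>(g,s). phi f g s) summable_on (G \<times> range t) \<and>
        c / (4 * \<delta>) * (norm f)\<^sup>2 \<le> (\<Sum>\<^sub>\<infinity>(g,s)\<in>G \<times> range t. phi f g s) \<and>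
        (\<Sum>\<^sub>\<infinity>(g,s)\<in>G \<times> range t. phi f g s) \<le> 2*B*M\<^sup>2/(1 - exp (2*\<omega>*\<epsilon>)) * (norm f)\<^sup>2"
    proof (intro allI conjI)
      fix f
      show "(\<lambda>(g,s). phi f g s) summable_on (G \<times> range t)" by (rule disc_upper(1)[OF eps tge])
      show "(\<Sum>\<^sub>\<infinity>(g,s)\<in>G \<times> range t. phi f g s) \<le> 2*B*M\<^sup>2/(1 - exp (2*\<omega>*\<epsilon>)) * (norm f)\<^sup>2"
        by (rule disc_upper(2)[OF eps tge])
      have l: "(\<Sum>\<^sub>\<infinity>g\<in>G. LINT s:{0..}|lborel. phi f g s) \<le> 2 * \<delta> * (\<Sum>\<^sub>\<infinity>(g,s)\<in>G \<times> range t. phi f g s)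
            + 4 * B * M\<^sup>2 * \<eta>\<^sup>2 * Kc * (norm f)\<^sup>2"
        using low_ii[OF t0 inc1 inc2 d1 eps tge deta, of f] cf[of f] by (simp add: Kc_def)
      have "c * (norm f)\<^sup>2 \<le> 2 * \<delta> * (\<Sum>\<^sub>\<infinity>(g,s)\<in>G \<times> range t. phi f g s) + c / 2 * (norm f)\<^sup>2"
        using l cf[of f] eta2 by simp
      then have "c / 2 * (norm f)\<^sup>2 \<le> 2 * \<delta> * (\<Sum>\<^sub>\<infinity>(g,s)\<in>G \<times> range t. phi f g s)" by simp
      then show "c / (4 * \<delta>) * (norm f)\<^sup>2 \<le> (\<Sum>\<^sub>\<infinity>(g,s)\<in>G \<times> range t. phi f g s)"
        using d0 by (simp add: field_simps)
    qed
    show "frame_family J (\<lambda>(g, s). op_exp s A g) (G \<times> range t)"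
      unfolding ff_iff using cpos Cpos all by blast
  qed
qed

end

context setting
begin

lemma II_III:
  assumes "\<exists>\<delta>>0. \<forall>t :: nat \<Rightarrow> real.
              (uniformly_separated (range t) \<and> t 0 = 0 \<and>
               (\<forall>j. 0 < t (Suc j) - t j \<and> t (Suc j) - t j < \<delta>))
              \<longrightarrow> frame_family J (\<lambda>(g, s). op_exp s A g) (G \<times> range t)"
  shows "\<exists>m>0. frame_family J (\<lambda>(g, s). op_exp s A g) (G \<times> range (\<lambda>j::nat. real j * m))"
proof -
  obtain \<delta> where d: "\<delta> > 0" and H: "\<And>t :: nat \<Rightarrow> real.
              (uniformly_separated (range t) \<and> t 0 = 0 \<and>
               (\<forall>j. 0 < t (Suc j) - t j \<and> t (Suc j) - t j < \<delta>))
              \<Longrightarrow> frame_family J (\<lambda>(g, s). op_exp s A g) (G \<times> range t)"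
    using assms by blast
  define m where "m = \<delta> / 2"
  have m0: "m > 0" using d by (simp add: m_def)
  have us: "uniformly_separated (range (\<lambda>j::nat. real j * m))"
    unfolding uniformly_separated_def
  proof (intro exI[of _ m] conjI ballI impI m0)
    fix x y assume "x \<in> range (\<lambda>j::nat. real j * m)" "y \<in> range (\<lambda>j::nat. real j * m)" "x \<noteq> y"
    then obtain i j :: nat where xy: "x = real i * m" "y = real j * m" "i \<noteq> j" by auto
    have "1 \<le> \<bar>real i - real j\<bar>" using xy(3) by linarith
    then have "1 * m \<le> \<bar>real i - real j\<bar> * m" using m0 by (intro mult_right_mono) auto
    also have "\<dots> = \<bar>x - y\<bar>"
    proof -
      have "x - y = (real i - real j) * m" by (simp add: xy algebra_simps)
      then show ?thesis using m0 by (simp add: abs_mult)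
    qed
    finally show "m \<le> \<bar>x - y\<bar>" by simp
  qed
  have "frame_family J (\<lambda>(g, s). op_exp s A g) (G \<times> range (\<lambda>j::nat. real j * m))"
    by (rule H) (use us m0 d in \<open>auto simp: m_def algebra_simps\<close>)
  then show ?thesis using m0 by blast
qed

lemma III_I:
  assumes K: "K > 0" and III: "\<exists>m>0. frame_family J (\<lambda>(g, s). op_exp s A g) (G \<times> range (\<lambda>j::nat. real j * m))"
  shows "semicont_frame J A G {0..}"
proof -
  obtain m where m0: "m > 0" and fr: "frame_family J (\<lambda>(g, s). op_exp s A g) (G \<times> range (\<lambda>j::nat. real j * m))"
    using III by blast
  obtain c0 C0 where c0: "c0 > 0" and cf: "\<And>f. (\<lambda>(g,s). phi f g s) summable_on (G \<times> range (\<lambda>j::nat. real j * m)) \<and>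
      c0 * (norm f)\<^sup>2 \<le> (\<Sum>\<^sub>\<infinity>(g,s)\<in>G \<times> range (\<lambda>j::nat. real j * m). phi f g s)"
    using fr unfolding ff_iff by blast
  define Kc where "Kc = exp (- 2 * \<omega>) / (- 2 * \<omega>)"
  have Kc0: "Kc > 0" using om unfolding Kc_def by (intro divide_pos_pos) auto
  define D where "D = 8 * B * M\<^sup>2 * K\<^sup>2 * (exp K)\<^sup>2 * Kc"
  have D0: "D \<ge> 0" using B0 Kc0 by (simp add: D_def)
  define k :: nat where "k = nat \<lceil>m * (1 + D / c0)\<rceil> + 1"
  have k1: "real k \<ge> m * (1 + D / c0)" unfolding k_def by linarith
  have kpos: "real k > 0" unfolding k_def by simp
  define h where "h = m / real k"
  have h0: "h > 0" using m0 kpos by (simp add: h_def)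
  have hk: "h * (1 + D / c0) \<le> 1"
  proof -
    have "h * (1 + D / c0) = m * (1 + D / c0) / real k" by (simp add: h_def)
    also have "\<dots> \<le> 1" using k1 kpos by simp
    finally show ?thesis .
  qed
  have h1: "h \<le> 1" using hk h0 D0 c0
    by (smt (verit, best) divide_nonneg_pos mult_le_cancel_left1)
  have hD: "h * D \<le> c0"
  proof -
    have "h * (D / c0) \<le> 1" using hk h0 by (simp add: algebra_simps)
    then show ?thesis using c0 by (simp add: field_simps)
  qed
  have sub: "range (\<lambda>j::nat. real j * m) \<subseteq> range (\<lambda>j::nat. real j * h)"
  proof
    fix x assume "x \<in> range (\<lambda>j::nat. real j * m)"
    then obtain j where "x = real j * m" by auto
    then have "x = real (j * k) * h" using kpos by (simp add: h_def)
    then show "x \<in> range (\<lambda>j::nat. real j * h)" by blast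
  qed
  define C where "C = 2 * B * M\<^sup>2 * (1 / (- 2 * \<omega>))"
  have Cpos: "C > 0"
  proof -
    have p1: "1 / (- 2 * \<omega>) > 0" using om by simp
    have p2: "M\<^sup>2 > 0" using M1 by simp
    have "2 * B * M\<^sup>2 > 0" using B0 p2 by simp
    then show ?thesis unfolding C_def using p1 by (rule mult_pos_pos)
  qed
  have cpos: "h * c0 / 4 > 0" using h0 c0 by simp
  have all: "\<forall>f. (\<forall>g\<in>G. set_integrable lborel {0..} (phi f g)) \<and>
      (\<lambda>g. LINT t:{0..}|lborel. phi f g t) summable_on G \<and>
      h * c0 / 4 * (norm f)\<^sup>2 \<le> (\<Sum>\<^sub>\<infinity>g\<in>G. LINT t:{0..}|lborel. phi f g t) \<and>
      (\<Sum>\<^sub>\<infinity>g\<in>G. LINT t:{0..}|lborel. phi f g t) \<le> C * (norm f)\<^sup>2"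
  proof (intro allI conjI ballI)
    fix f
    show "\<And>g. g \<in> G \<Longrightarrow> set_integrable lborel {0..} (phi f g)" by (rule phi_int)
    show "(\<lambda>g. LINT t:{0..}|lborel. phi f g t) summable_on G" by (rule IC_upper(1))
    show "(\<Sum>\<^sub>\<infinity>g\<in>G. LINT t:{0..}|lborel. phi f g t) \<le> C * (norm f)\<^sup>2"
      using IC_upper(2)[of f] by (simp add: C_def ac_simps)
    define Sc where "Sc = (\<Sum>\<^sub>\<infinity>g\<in>G. LINT t:{0..}|lborel. phi f g t)"
    have tge_m: "real j * m \<ge> m * real j" for j by simp
    have tge_h: "real j * h \<ge> h * real j" for j by simp
    have "c0 * (norm f)\<^sup>2 \<le> (\<Sum>\<^sub>\<infinity>(g,s)\<in>G \<times> range (\<lambda>j::nat. real j * m). phi f g s)"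
      using cf by blast
    also have "\<dots> \<le> (\<Sum>\<^sub>\<infinity>(g,s)\<in>G \<times> range (\<lambda>j::nat. real j * h). phi f g s)"
      by (rule infsum_mono2[OF disc_upper(1)[OF m0 tge_m] disc_upper(1)[OF h0 tge_h]])
         (use sub in \<open>auto simp: phi0\<close>)
    finally have l1: "c0 * (norm f)\<^sup>2 \<le> (\<Sum>\<^sub>\<infinity>(g,s)\<in>G \<times> range (\<lambda>j::nat. real j * h). phi f g s)" .
    have l2: "h * (\<Sum>\<^sub>\<infinity>(g,s)\<in>G \<times> range (\<lambda>j::nat. real j * h). phi f g s) \<le> 2 * Sc
          + 4 * B * M\<^sup>2 * (exp (h * K) - 1)\<^sup>2 * Kc * (norm f)\<^sup>2"
      using low_iii[OF h0 h1, of f] by (simp add: Sc_def Kc_def)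
    have e: "(exp (h * K) - 1)\<^sup>2 \<le> (h * K * exp K)\<^sup>2"
    proof (rule power_mono)
      have "exp (h * K) - 1 \<le> h * K * exp (h * K)" by (rule expm1_le) (use h0 K in simp)
      also have "\<dots> \<le> h * K * exp K" using h1 h0 K by (intro mult_left_mono) (auto simp: mult_left_le_one_le)
      finally show "exp (h * K) - 1 \<le> h * K * exp K" .
      show "0 \<le> exp (h * K) - 1" using h0 K by simp
    qed
    have "4 * B * M\<^sup>2 * (exp (h * K) - 1)\<^sup>2 * Kc * (norm f)\<^sup>2 \<le> 4 * B * M\<^sup>2 * (h * K * exp K)\<^sup>2 * Kc * (norm f)\<^sup>2"
      using e B0 Kc0 by (intro mult_right_mono mult_left_mono) auto
    also have "\<dots> = h * (h * D) / 2 * (norm f)\<^sup>2" by (simp add: D_def power_mult_distrib power2_eq_square)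
    also have "\<dots> \<le> h * c0 / 2 * (norm f)\<^sup>2" using hD h0 by (intro mult_right_mono) auto
    finally have l3: "4 * B * M\<^sup>2 * (exp (h * K) - 1)\<^sup>2 * Kc * (norm f)\<^sup>2 \<le> h * c0 / 2 * (norm f)\<^sup>2" .
    have "h * (c0 * (norm f)\<^sup>2) \<le> h * (\<Sum>\<^sub>\<infinity>(g,s)\<in>G \<times> range (\<lambda>j::nat. real j * h). phi f g s)"
      using l1 h0 by (intro mult_left_mono) auto
    then have "h * c0 * (norm f)\<^sup>2 \<le> 2 * Sc + h * c0 / 2 * (norm f)\<^sup>2" using l2 l3 by (simp add: ac_simps)
    then show "h * c0 / 4 * (norm f)\<^sup>2 \<le> Sc" by simp
  qed
  show ?thesis unfolding sf_iff using cpos Cpos all by blast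
qed

end

theorem mainTheorem2:
  fixes J :: "'a::{real_inner, complete_space} \<Rightarrow> 'a"
    and A :: "'a \<Rightarrow> 'a"
    and G :: "'a set"
  assumes "complex_structure J"
    and "separable_space TYPE('a)"
    and "bounded_clinear_op J A"
    and "countable G"
    and "bessel_family J (\<lambda>g. g) G"
    and "exp_stable A"
  shows "(semicont_frame J A G {0..} \<longleftrightarrow>
          (\<exists>\<delta>>0. \<forall>t :: nat \<Rightarrow> real.
              (uniformly_separated (range t) \<and> t 0 = 0 \<and>
               (\<forall>j. 0 < t (Suc j) - t j \<and> t (Suc j) - t j < \<delta>))
              \<longrightarrow> frame_family J (\<lambda>(g, s). op_exp s A g) (G \<times> range t))) \<and>
         (semicont_frame J A G {0..} \<longleftrightarrow>
          (\<exists>m>0. frame_family J (\<lambda>(g, s). op_exp s A g) (G \<times> range (\<lambda>j::nat. real j * m))))"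
proof -
  have blA: "bounded_linear A" using assms(3) by (simp add: bounded_clinear_op_def)
  obtain K where K: "K > 0" "\<And>x. norm (A x) \<le> norm x * K"
    using bounded_linear.pos_bounded[OF blA] by blast
  obtain B where B0: "B > 0" and Bf: "\<And>f. (\<lambda>g. (cmod (cinner J f g))\<^sup>2) summable_on G \<and>
      (\<Sum>\<^sub>\<infinity>g\<in>G. (cmod (cinner J f g))\<^sup>2) \<le> B * (norm f)\<^sup>2"
    using assms(5) unfolding bessel_family_def by blast
  obtain M \<omega> where M1: "M \<ge> 1" and om: "\<omega> < 0" and st: "\<And>t. t \<ge> 0 \<Longrightarrow> onorm (op_exp t A) \<le> M * exp (\<omega> * t)"
    using assms(6) unfolding exp_stable_def by blast
  have eA: "expA A K"
  proof (rule expA.intro)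
    show "bounded_linear A" by (rule blA)
    show "\<And>x. norm (A x) \<le> K * norm x" using K(2) by (simp add: mult.commute)
    show "0 \<le> K" using K(1) by simp
  qed
  have sA: "setting_axioms A J G B M \<omega>"
  proof (rule setting_axioms.intro)
    show "complex_structure J" by (rule assms(1))
    show "\<And>f. (\<lambda>g. (cmod (cinner J f g))\<^sup>2) summable_on G" using Bf by blast
    show "\<And>f. (\<Sum>\<^sub>\<infinity>g\<in>G. (cmod (cinner J f g))\<^sup>2) \<le> B * (norm f)\<^sup>2" using Bf by blast
    show "B > 0" by (rule B0)
    show "M \<ge> 1" by (rule M1)
    show "\<omega> < 0" by (rule om)
    show "\<And>t. t \<ge> 0 \<Longrightarrow> onorm (expA.E A t) \<le> M * exp (\<omega> * t)"
      using st by (simp add: expA.E_def[OF eA])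
  qed
  interpret S: setting A K J G B M \<omega> by (rule setting.intro[OF eA sA])
  have 1: "semicont_frame J A G {0..} \<Longrightarrow>
          (\<exists>\<delta>>0. \<forall>t :: nat \<Rightarrow> real.
              (uniformly_separated (range t) \<and> t 0 = 0 \<and>
               (\<forall>j. 0 < t (Suc j) - t j \<and> t (Suc j) - t j < \<delta>))
              \<longrightarrow> frame_family J (\<lambda>(g, s). op_exp s A g) (G \<times> range t))"
    by (rule S.I_II[OF K(1)])
  have 2: "(\<exists>\<delta>>0. \<forall>t :: nat \<Rightarrow> real.
              (uniformly_separated (range t) \<and> t 0 = 0 \<and>
               (\<forall>j. 0 < t (Suc j) - t j \<and> t (Suc j) - t j < \<delta>))
              \<longrightarrow> frame_family J (\<lambda>(g, s). op_exp s A g) (G \<times> range t)) \<Longrightarrow>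
          (\<exists>m>0. frame_family J (\<lambda>(g, s). op_exp s A g) (G \<times> range (\<lambda>j::nat. real j * m)))"
    by (rule S.II_III)
  have 3: "(\<exists>m>0. frame_family J (\<lambda>(g, s). op_exp s A g) (G \<times> range (\<lambda>j::nat. real j * m))) \<Longrightarrow>
          semicont_frame J A G {0..}"
    by (rule S.III_I[OF K(1)])
  show ?thesis using 1 2 3 by blast
qed


end
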